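(* In the setting below, for nonzero $F_1,\dots,F_n\in K_w[\mathcal G\oplus\mathcal H]$, $$\mathop{\mathrm{Res}}_{\mathbf x}F_1^{-1}\cdots F_n^{-1}J(F_1,\dots,F_n)=j(F_1,\dots,F_n),$$ equivalently $\mathop{\mathrm{CT}}_{\mathbf x}LJ(F_1,\dots,F_n)=j(F_1,\dots,F_n)$.
   Context: $K$ a field; $\mathcal G\oplus\mathcal H$ a totally ordered abelian group with $\mathcal H\cong\mathbb Z^n$, $x_i=t^{\epsilon_i}$ for a basis $\epsilon_1,\dots,\epsilon_n$ of $\mathcal H$; $K_w[\mathcal G\oplus\mathcal H]$ is the field of Malcev–Neumann series (formal series with well-ordered support), elements written $\sum_{\mathbf k}b_{\mathbf k}\mathbf x^{\mathbf k}$ with $b_{\mathbf k}\in K_w[\mathcal G]$; the $x$-initial term is the nonzero $b_{\mathbf k}\mathbf x^{\mathbf k}$ of least order. Partial derivatives act termwise, $\mathop{\mathrm{CT}}_{\mathbf x}$ and $\mathop{\mathrm{Res}}_{\mathbf x}$ extract $b_{\mathbf 0}$ and $b_{(-1,\dots,-1)}$. $J=\det(\partial F_i/\partial x_j)$, $LJ=\frac{x_1\cdots x_n}{F_1\cdots F_n}J$, and $j(F_1,\dots,F_n)=\det(b_{ij})$ where $a_ix_1^{b_{i1}}\cdots x_n^{b_{in}}$ is the $x$-initial term of $F_i$. *)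

theory Defs
  imports "Jordan_Normal_Form.Determinant" "HOL-Combinatorics.Permutations"
begin

(* The totally ordered abelian group G (+) H is modelled as a linearly ordered
   abelian group type 'a; G is a subgroup, eps 0..eps (n-1) are the basis of H,
   and every element decomposes uniquely as g + sum k_i eps_i. *)

definition zmult :: "int \<Rightarrow> 'a::ab_group_add \<Rightarrow> 'a" where
  "zmult k a = (if 0 \<le> k then (\<Sum>_<nat k. a) else - (\<Sum>_<nat (-k). a))"

definition exps :: "nat \<Rightarrow> (nat \<Rightarrow> int) set" where
  "exps n = {k. \<forall>i\<ge>n. k i = 0}"

definition hvec :: "nat \<Rightarrow> (nat \<Rightarrow> 'a::ab_group_add) \<Rightarrow> (nat \<Rightarrow> int) \<Rightarrow> 'a" where
  "hvec n eps k = (\<Sum>i<n. zmult (k i) (eps i))"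

definition direct_sum_decomp :: "'a::ab_group_add set \<Rightarrow> nat \<Rightarrow> (nat \<Rightarrow> 'a) \<Rightarrow> bool" where
  "direct_sum_decomp G n eps \<longleftrightarrow>
     0 \<in> G \<and> (\<forall>a\<in>G. \<forall>b\<in>G. a + b \<in> G) \<and> (\<forall>a\<in>G. - a \<in> G) \<and>
     (\<forall>\<gamma>. \<exists>!p. fst p \<in> G \<and> snd p \<in> exps n \<and> \<gamma> = fst p + hvec n eps (snd p))"

definition xdeg :: "'a::ab_group_add set \<Rightarrow> nat \<Rightarrow> (nat \<Rightarrow> 'a) \<Rightarrow> 'a \<Rightarrow> (nat \<Rightarrow> int)" where
  "xdeg G n eps \<gamma> = snd (THE p. fst p \<in> G \<and> snd p \<in> exps n \<and> \<gamma> = fst p + hvec n eps (snd p))"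

definition is_MN :: "('a::linorder \<Rightarrow> 'k::zero) \<Rightarrow> bool" where
  "is_MN f \<longleftrightarrow> (\<forall>S \<subseteq> {\<gamma>. f \<gamma> \<noteq> 0}. S \<noteq> {} \<longrightarrow> (\<exists>m\<in>S. \<forall>s\<in>S. m \<le> s))"

definition mn_mult :: "('a::ab_group_add \<Rightarrow> 'k::comm_ring_1) \<Rightarrow> ('a \<Rightarrow> 'k) \<Rightarrow> 'a \<Rightarrow> 'k" where
  "mn_mult f g = (\<lambda>\<gamma>. \<Sum>(\<alpha>,\<beta>)\<in>{(\<alpha>,\<beta>). f \<alpha> \<noteq> 0 \<and> g \<beta> \<noteq> 0 \<and> \<alpha> + \<beta> = \<gamma>}. f \<alpha> * g \<beta>)"

definition mn_one :: "'a::zero \<Rightarrow> 'k::{zero,one}" where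
  "mn_one = (\<lambda>\<gamma>. if \<gamma> = 0 then 1 else 0)"

definition mn_inv :: "('a::linordered_ab_group_add \<Rightarrow> 'k::field) \<Rightarrow> 'a \<Rightarrow> 'k" where
  "mn_inv f = (THE h. is_MN h \<and> mn_mult f h = mn_one)"

definition mn_prod :: "('a::ab_group_add \<Rightarrow> 'k::comm_ring_1) list \<Rightarrow> 'a \<Rightarrow> 'k" where
  "mn_prod fs = foldr mn_mult fs mn_one"

(* the monomial x_i = t^{eps i} *)
definition mn_x :: "(nat \<Rightarrow> 'a::zero) \<Rightarrow> nat \<Rightarrow> 'a \<Rightarrow> 'k::{zero,one}" where
  "mn_x eps i = (\<lambda>\<gamma>. if \<gamma> = eps i then 1 else 0)"

(* termwise partial derivative d/dx_j *)
definition mn_deriv :: "'a::ab_group_add set \<Rightarrow> nat \<Rightarrow> (nat \<Rightarrow> 'a) \<Rightarrow> nat \<Rightarrow> ('a \<Rightarrow> 'k::comm_ring_1) \<Rightarrow> 'a \<Rightarrow> 'k" where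
  "mn_deriv G n eps j f = (\<lambda>\<gamma>. of_int (xdeg G n eps (\<gamma> + eps j) j) * f (\<gamma> + eps j))"

definition jac :: "'a::ab_group_add set \<Rightarrow> nat \<Rightarrow> (nat \<Rightarrow> 'a) \<Rightarrow> (nat \<Rightarrow> 'a \<Rightarrow> 'k::comm_ring_1) \<Rightarrow> 'a \<Rightarrow> 'k" where
  "jac G n eps F = (\<lambda>\<gamma>. \<Sum>p\<in>{p. p permutes {..<n}}.
      of_int (sign p) * mn_prod (map (\<lambda>i. mn_deriv G n eps (p i) (F i)) [0..<n]) \<gamma>)"

(* CT_x and Res_x: coefficients b_0 and b_(-1,...,-1), as elements of K_w[G] *)
definition CT :: "'a set \<Rightarrow> ('a \<Rightarrow> 'k::zero) \<Rightarrow> 'a \<Rightarrow> 'k" where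
  "CT G f = (\<lambda>\<gamma>. if \<gamma> \<in> G then f \<gamma> else 0)"

definition Res :: "'a::ab_group_add set \<Rightarrow> nat \<Rightarrow> (nat \<Rightarrow> 'a) \<Rightarrow> ('a \<Rightarrow> 'k::zero) \<Rightarrow> 'a \<Rightarrow> 'k" where
  "Res G n eps f = (\<lambda>\<gamma>. if \<gamma> \<in> G then f (\<gamma> + hvec n eps (\<lambda>i. if i < n then -1 else 0)) else 0)"

definition xcomp :: "'a::ab_group_add set \<Rightarrow> nat \<Rightarrow> (nat \<Rightarrow> 'a) \<Rightarrow> ('a \<Rightarrow> 'k::zero) \<Rightarrow> (nat \<Rightarrow> int) \<Rightarrow> 'a \<Rightarrow> 'k" where
  "xcomp G n eps F k = (\<lambda>\<gamma>. if xdeg G n eps \<gamma> = k then F \<gamma> else 0)"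

definition mn_ord :: "('a::linorder \<Rightarrow> 'k::zero) \<Rightarrow> 'a" where
  "mn_ord f = (LEAST \<gamma>. f \<gamma> \<noteq> 0)"

definition x_init_exp :: "'a::linordered_ab_group_add set \<Rightarrow> nat \<Rightarrow> (nat \<Rightarrow> 'a) \<Rightarrow> ('a \<Rightarrow> 'k::zero) \<Rightarrow> nat \<Rightarrow> int" where
  "x_init_exp G n eps F = (THE k. k \<in> exps n \<and> xcomp G n eps F k \<noteq> (\<lambda>_. 0) \<and>
      (\<forall>k'\<in>exps n. xcomp G n eps F k' \<noteq> (\<lambda>_. 0) \<longrightarrow>
          mn_ord (xcomp G n eps F k) \<le> mn_ord (xcomp G n eps F k')))"

definition jdet :: "'a::linordered_ab_group_add set \<Rightarrow> nat \<Rightarrow> (nat \<Rightarrow> 'a) \<Rightarrow> (nat \<Rightarrow> 'a \<Rightarrow> 'k::zero) \<Rightarrow> int" where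
  "jdet G n eps F = det (mat n n (\<lambda>(i,j). x_init_exp G n eps (F i) j))"

definition LJ :: "'a::linordered_ab_group_add set \<Rightarrow> nat \<Rightarrow> (nat \<Rightarrow> 'a) \<Rightarrow> (nat \<Rightarrow> 'a \<Rightarrow> 'k::field) \<Rightarrow> 'a \<Rightarrow> 'k" where
  "LJ G n eps F = mn_mult (mn_prod (map (mn_x eps) [0..<n]))
      (mn_mult (mn_prod (map (\<lambda>i. mn_inv (F i)) [0..<n])) (jac G n eps F))"

end

theory Submission
  imports Defs "HOL-Combinatorics.Multiset_Permutations"
begin

definition wo :: "'a::linorder set \<Rightarrow> bool" where
  "wo S \<longleftrightarrow> (\<forall>T\<subseteq>S. T \<noteq> {} \<longrightarrow> (\<exists>m\<in>T. \<forall>s\<in>T. m \<le> s))"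

lemma is_MN_wo: "is_MN f \<longleftrightarrow> wo {\<gamma>. f \<gamma> \<noteq> 0}"
  unfolding is_MN_def wo_def by simp

lemma wo_subset: "wo S \<Longrightarrow> T \<subseteq> S \<Longrightarrow> wo T"
  unfolding wo_def by blast

lemma wo_Un: assumes "wo (S::'a::linorder set)" "wo T" shows "wo (S \<union> T)"
  unfolding wo_def
proof (intro allI impI)
  fix U assume U: "U \<subseteq> S \<union> T" "U \<noteq> {}"
  show "\<exists>m\<in>U. \<forall>s\<in>U. m \<le> s"
  proof (cases "U \<inter> S = {}")
    case True
    then have "U \<subseteq> T" using U by blast
    then show ?thesis using assms(2) U(2) unfolding wo_def by blast
  next
    case False
    obtain m1 where m1: "m1 \<in> U \<inter> S" "\<forall>s\<in>U \<inter> S. m1 \<le> s" using assms(1) False unfolding wo_def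
      by (metis inf_le2)
    show ?thesis
    proof (cases "U \<inter> T = {}")
      case True
      then show ?thesis using m1 U(1) by blast
    next
      case False
      obtain m2 where m2: "m2 \<in> U \<inter> T" "\<forall>s\<in>U \<inter> T. m2 \<le> s" using assms(2) False unfolding wo_def
        by (metis inf_le2)
      have "min m1 m2 \<in> U" using m1 m2 by (simp add: min_def)
      moreover have "\<forall>s\<in>U. min m1 m2 \<le> s"
      proof
        fix s assume "s \<in> U"
        then have "s \<in> U \<inter> S \<or> s \<in> U \<inter> T" using U(1) by blast
        then show "min m1 m2 \<le> s" using m1 m2 by (auto simp: min_le_iff_disj)
      qed
      ultimately show ?thesis by blast
    qed
  qed
qed

lemma wo_finite: "finite (S::'a::linorder set) \<Longrightarrow> wo S"
  unfolding wo_def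
  by (metis Min_le Min_in finite_subset)

lemma wo_empty[simp]: "wo {}" by (simp add: wo_def)

lemma wo_no_decr:
  fixes S :: "'a::linorder set"
  shows "wo S \<longleftrightarrow> \<not>(\<exists>f. (\<forall>i. f i \<in> S) \<and> (\<forall>i. f (Suc i) < f i))"
proof
  assume w: "wo S"
  show "\<not>(\<exists>f. (\<forall>i. f i \<in> S) \<and> (\<forall>i. f (Suc i) < f i))"
  proof
    assume "\<exists>f. (\<forall>i. f i \<in> S) \<and> (\<forall>i. f (Suc i) < f i)"
    then obtain f where f: "\<forall>i. f i \<in> S" "\<forall>i. f (Suc i) < f i" by blast
    have "range f \<subseteq> S" "range f \<noteq> {}" using f by auto
    then obtain m where "m \<in> range f" "\<forall>s\<in>range f. m \<le> s" using w unfolding wo_def by blast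
    then obtain k where "\<forall>s\<in>range f. f k \<le> s" by blast
    then have "f k \<le> f (Suc k)" by blast
    then show False using f(2) by (meson leD)
  qed
next
  assume nd: "\<not>(\<exists>f. (\<forall>i. f i \<in> S) \<and> (\<forall>i. f (Suc i) < f i))"
  show "wo S" unfolding wo_def
  proof (intro allI impI, rule ccontr)
    fix T assume T: "T \<subseteq> S" "T \<noteq> {}" "\<not> (\<exists>m\<in>T. \<forall>s\<in>T. m \<le> s)"
    then have "\<forall>x\<in>T. \<exists>y\<in>T. y < x" by (meson not_le)
    then obtain g where g: "\<forall>x\<in>T. g x \<in> T \<and> g x < x" by metis
    obtain x0 where x0: "x0 \<in> T" using T by blast
    define f where "f i = (g ^^ i) x0" for i
    have fT: "f i \<in> T" for i by (induction i) (use x0 g in \<open>auto simp: f_def\<close>)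
    have "f (Suc i) < f i" for i using g fT[of i] by (simp add: f_def)
    then show False using nd fT T(1) by blast
  qed
qed

lemma decr_less:
  fixes f :: "nat \<Rightarrow> 'a::linorder"
  assumes "\<forall>i. f (Suc i) < f i" "i < j" shows "f j < f i"
  using assms(2)
proof (induction j)
  case 0 then show ?case by simp
next
  case (Suc j)
  then show ?case using assms(1) by (metis less_Suc_eq order.strict_trans)
qed

lemma wo_nds:
  fixes f :: "nat \<Rightarrow> 'a::linorder"
  assumes "wo S" "\<forall>i. f i \<in> S"
  shows "\<exists>r. strict_mono r \<and> (\<forall>i. f (r i) \<le> f (r (Suc i)))"
proof -
  obtain r where r: "strict_mono r" "monoseq (\<lambda>n. f (r n))" using seq_monosub by blast
  show ?thesis
  proof (cases "\<forall>m n. m \<le> n \<longrightarrow> f (r m) \<le> f (r n)")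
    case True
    then show ?thesis using r(1) by (intro exI[of _ r]) auto
  next
    case False
    then have anti: "\<forall>m n. m \<le> n \<longrightarrow> f (r n) \<le> f (r m)" using r(2) unfolding monoseq_def by blast
    have "range (\<lambda>n. f (r n)) \<subseteq> S" "range (\<lambda>n. f (r n)) \<noteq> {}" using assms(2) by auto
    then obtain m where m: "m \<in> range (\<lambda>n. f (r n))" "\<forall>s\<in>range (\<lambda>n. f (r n)). m \<le> s"
      using assms(1) unfolding wo_def by blast
    then obtain N where N: "m = f (r N)" by blast
    have eq: "f (r (N + i)) = f (r N)" for i
    proof -
      have "f (r (N + i)) \<le> f (r N)" using anti by simp
      moreover have "f (r N) \<le> f (r (N + i))" using m(2) N by simp
      ultimately show ?thesis by simp
    qed
    have sm: "strict_mono (\<lambda>i. r (N + i))" using r(1) unfolding strict_mono_def by simp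
    show ?thesis
      apply (intro exI[of _ "\<lambda>i. r (N + i)"])
      using sm eq by (metis add_Suc_right order_refl)
  qed
qed

definition setplus :: "'a::plus set \<Rightarrow> 'a set \<Rightarrow> 'a set" where
  "setplus A B = {a + b |a b. a \<in> A \<and> b \<in> B}"

lemma wo_setplus:
  fixes A B :: "'a::linordered_ab_group_add set"
  assumes "wo A" "wo B" shows "wo (setplus A B)"
proof -
  have "\<not>(\<exists>f. (\<forall>i. f i \<in> setplus A B) \<and> (\<forall>i. f (Suc i) < f i))"
  proof
    assume "\<exists>f. (\<forall>i. f i \<in> setplus A B) \<and> (\<forall>i. f (Suc i) < f i)"
    then obtain f where f: "\<forall>i. f i \<in> setplus A B" "\<forall>i. f (Suc i) < f i" by blast
    have "\<exists>p. fst p \<in> A \<and> snd p \<in> B \<and> f i = fst p + snd p" for i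
    proof -
      obtain a b where "a \<in> A" "b \<in> B" "f i = a + b" using f(1) unfolding setplus_def by blast
      then show ?thesis by (intro exI[of _ "(a, b)"]) simp
    qed
    then have "\<forall>i. \<exists>p. fst p \<in> A \<and> snd p \<in> B \<and> f i = fst p + snd p" by blast
    from choice[OF this] obtain P where P: "\<forall>i. fst (P i) \<in> A \<and> snd (P i) \<in> B \<and> f i = fst (P i) + snd (P i)" by blast
    define a where "a i = fst (P i)" for i
    define b where "b i = snd (P i)" for i
    have ab: "\<forall>i. a i \<in> A \<and> b i \<in> B \<and> f i = a i + b i" using P by (simp add: a_def b_def)
    obtain r1 where r1: "strict_mono r1" "\<forall>i. a (r1 i) \<le> a (r1 (Suc i))"
      using wo_nds[OF assms(1), of a] ab by blast
    obtain r2 where r2: "strict_mono r2" "\<forall>i. b (r1 (r2 i)) \<le> b (r1 (r2 (Suc i)))"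
      using wo_nds[OF assms(2), of "\<lambda>i. b (r1 i)"] ab by blast
    have mono1: "a (r1 i) \<le> a (r1 j)" if "i \<le> j" for i j
      using that
    proof (induction j)
      case (Suc j)
      show ?case
      proof (cases "i = Suc j")
        case False
        then have "a (r1 i) \<le> a (r1 j)" using Suc by simp
        also have "\<dots> \<le> a (r1 (Suc j))" using r1(2) by blast
        finally show ?thesis .
      qed simp
    qed simp
    define R where "R i = r1 (r2 i)" for i
    have "R 0 < R 1" using r1(1) r2(1) by (simp add: R_def strict_mono_def)
    then have lt: "f (R 1) < f (R 0)" using decr_less[OF f(2)] by blast
    have "a (R 0) \<le> a (R 1)" using mono1 r2(1) by (simp add: R_def strict_mono_less_eq)
    moreover have "b (R 0) \<le> b (R 1)" using r2(2)[rule_format, of 0] by (simp add: R_def)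
    ultimately have "f (R 0) \<le> f (R 1)" using ab by (simp add: add_mono)
    then show False using lt by simp
  qed
  then show ?thesis using wo_no_decr by blast
qed

lemma finite_decomp:
  fixes A B :: "'a::linordered_ab_group_add set"
  assumes "wo A" "wo B" shows "finite {a\<in>A. g - a \<in> B}"
proof (rule ccontr)
  assume "infinite {a\<in>A. g - a \<in> B}"
  then obtain f :: "nat \<Rightarrow> 'a" where f: "inj f" "range f \<subseteq> {a\<in>A. g - a \<in> B}" using infinite_countable_subset by blast
  obtain r where r: "strict_mono r" "\<forall>i. f (r i) \<le> f (r (Suc i))"
    using wo_nds[OF assms(1), of f] f(2) by blast
  have "f (r i) < f (r (Suc i))" for i
  proof -
    have "r i \<noteq> r (Suc i)" using r(1) by (simp add: strict_mono_eq)
    then have "f (r i) \<noteq> f (r (Suc i))" using f(1) by (simp add: inj_eq)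
    then show ?thesis using r(2)[rule_format, of i] by (simp add: less_le)
  qed
  then have "\<forall>i. g - f (r (Suc i)) < g - f (r i)" by simp
  moreover have "\<forall>i. g - f (r i) \<in> B" using f(2) by blast
  ultimately have "\<exists>h. (\<forall>i. h i \<in> B) \<and> (\<forall>i. h (Suc i) < h i)"
    by (intro exI[of _ "\<lambda>i. g - f (r i)"]) simp
  then show False using assms(2) wo_no_decr by blast
qed

definition badseq :: "'a::order set \<Rightarrow> (nat \<Rightarrow> 'a) \<Rightarrow> bool" where
  "badseq S f \<longleftrightarrow> (\<forall>i. f i \<in> S) \<and> (\<forall>i. f (Suc i) < f i)"

definition extp :: "'a::order set \<Rightarrow> 'a list \<Rightarrow> bool" where
  "extp S xs \<longleftrightarrow> (\<exists>f. badseq S f \<and> (\<forall>i<length xs. f i = xs ! i))"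

definition nxt :: "'a::order set \<Rightarrow> ('a \<Rightarrow> nat) \<Rightarrow> 'a list \<Rightarrow> 'a" where
  "nxt S \<mu> xs = (SOME x. extp S (xs @ [x]) \<and> (\<forall>y. extp S (xs @ [y]) \<longrightarrow> \<mu> x \<le> \<mu> y))"

primrec mbs :: "'a::order set \<Rightarrow> ('a \<Rightarrow> nat) \<Rightarrow> nat \<Rightarrow> 'a list" where
  "mbs S \<mu> 0 = []"
| "mbs S \<mu> (Suc k) = mbs S \<mu> k @ [nxt S \<mu> (mbs S \<mu> k)]"

declare mbs.simps(2)[simp del]

lemma length_mbs[simp]: "length (mbs S \<mu> k) = k"
  by (induction k) (auto simp: mbs.simps)

lemma nxt_spec:
  assumes "extp S xs"
  shows "extp S (xs @ [nxt S \<mu> xs]) \<and> (\<forall>y. extp S (xs @ [y]) \<longrightarrow> \<mu> (nxt S \<mu> xs) \<le> \<mu> y)"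
proof -
  obtain f where f: "badseq S f" "\<forall>i<length xs. f i = xs ! i" using assms unfolding extp_def by blast
  have "extp S (xs @ [f (length xs)])"
    unfolding extp_def
  proof (intro exI[of _ f] conjI allI impI)
    show "badseq S f" by fact
    fix i assume "i < length (xs @ [f (length xs)])"
    then have "i < length xs \<or> i = length xs" by auto
    then show "f i = (xs @ [f (length xs)]) ! i" using f(2) by (auto simp: nth_append)
  qed
  then have "\<exists>x. extp S (xs @ [x])" by blast
  then obtain x where "extp S (xs @ [x]) \<and> (\<forall>y. extp S (xs @ [y]) \<longrightarrow> \<mu> x \<le> \<mu> y)"
    using ex_has_least_nat[of "\<lambda>x. extp S (xs @ [x])" _ \<mu>] by blast
  then show ?thesis unfolding nxt_def by (rule someI)
qed

lemma mbs_extp: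
  assumes "\<exists>f. badseq S f" shows "extp S (mbs S \<mu> k)"
proof (induction k)
  case 0 then show ?case using assms by (simp add: extp_def)
next
  case (Suc k) then show ?case using nxt_spec[OF Suc.IH, of \<mu>] by (simp add: mbs.simps)
qed

lemma mbs_nth: "i < k \<Longrightarrow> mbs S \<mu> k ! i = nxt S \<mu> (mbs S \<mu> i)"
proof (induction k)
  case 0 then show ?case by simp
next
  case (Suc k)
  then show ?case
    by (cases "i = k") (auto simp: nth_append mbs.simps)
qed

lemma mbs_map: fixes \<mu> :: "'a::order \<Rightarrow> nat" shows "mbs S \<mu> k = map (\<lambda>i. nxt S \<mu> (mbs S \<mu> i)) [0..<k]"
  by (rule nth_equalityI) (auto simp: mbs_nth)

lemma min_bad_seq:
  fixes \<mu> :: "'a::order \<Rightarrow> nat"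
  assumes "\<exists>f. badseq S f"
  shows "\<exists>m. badseq S m \<and> (\<forall>k f. badseq S f \<and> (\<forall>i<k. f i = m i) \<longrightarrow> \<mu> (m k) \<le> \<mu> (f k))"
proof -
  define m where "m i = nxt S \<mu> (mbs S \<mu> i)" for i
  have bad: "badseq S m" unfolding badseq_def
  proof (intro conjI allI)
    fix i
    obtain f where f: "badseq S f" "\<forall>j<length (mbs S \<mu> (Suc (Suc i))). f j = mbs S \<mu> (Suc (Suc i)) ! j"
      using mbs_extp[OF assms, of \<mu> "Suc (Suc i)"] unfolding extp_def by blast
    have "f i = m i" "f (Suc i) = m (Suc i)" using f(2) by (auto simp: mbs_nth m_def)
    then show "m i \<in> S" "m (Suc i) < m i" using f(1) unfolding badseq_def by metis+
  qed
  have "badseq S f \<and> (\<forall>i<k. f i = m i) \<longrightarrow> \<mu> (m k) \<le> \<mu> (f k)" for k f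
  proof
    assume a: "badseq S f \<and> (\<forall>i<k. f i = m i)"
    have "extp S (mbs S \<mu> k @ [f k])"
      unfolding extp_def
    proof (intro exI[of _ f] conjI allI impI)
      show "badseq S f" using a by blast
      fix i assume "i < length (mbs S \<mu> k @ [f k])"
      then have "i < k \<or> i = k" by auto
      then show "f i = (mbs S \<mu> k @ [f k]) ! i" using a by (auto simp: nth_append mbs_nth m_def)
    qed
    then show "\<mu> (m k) \<le> \<mu> (f k)" using nxt_spec[OF mbs_extp[OF assms]] unfolding m_def by blast
  qed
  then show ?thesis using bad by blast
qed

definition lsums :: "'a::monoid_add set \<Rightarrow> 'a set" where
  "lsums A = {sum_list t |t. t \<in> lists A}"

definition llen :: "'a::monoid_add set \<Rightarrow> 'a \<Rightarrow> nat" where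
  "llen A x = (LEAST n. \<exists>t\<in>lists A. length t = n \<and> sum_list t = x)"

lemma llen_ex: "x \<in> lsums A \<Longrightarrow> \<exists>t\<in>lists A. length t = llen A x \<and> sum_list t = x"
  unfolding llen_def lsums_def
  by (rule LeastI_ex) blast

lemma llen_le: "t \<in> lists A \<Longrightarrow> llen A (sum_list t) \<le> length t"
  unfolding llen_def by (rule Least_le) blast

lemma lsums_nonneg:
  fixes A :: "'a::ordered_comm_monoid_add set"
  assumes "A \<subseteq> {a. 0 < a}" "x \<in> lsums A" shows "0 \<le> x"
proof -
  obtain t where "t \<in> lists A" "x = sum_list t" using assms(2) unfolding lsums_def by blast
  then show ?thesis using assms(1) by (auto intro!: sum_list_nonneg)
qed

lemma zero_lsums: "0 \<in> lsums A"
  unfolding lsums_def by (rule CollectI, rule exI[of _ "[]"]) simp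

lemma Cons_lsums: assumes "a \<in> A" "y \<in> lsums A" shows "a + y \<in> lsums A"
proof -
  obtain t where "t \<in> lists A" "y = sum_list t" using assms(2) unfolding lsums_def by blast
  then show ?thesis using assms(1) unfolding lsums_def by (intro CollectI exI[of _ "a # t"]) auto
qed

lemma neumann_wo:
  fixes A :: "'a::linordered_ab_group_add set"
  assumes pos: "A \<subseteq> {a. 0 < a}" and woA: "wo A"
  shows "wo (lsums A)"
proof (rule ccontr)
  assume "\<not> wo (lsums A)"
  then have "\<exists>f. badseq (lsums A) f" unfolding wo_no_decr badseq_def by blast
  from min_bad_seq[OF this, of "llen A"] obtain m where
    bad: "badseq (lsums A) m" and
    minm: "\<And>k f. badseq (lsums A) f \<Longrightarrow> (\<forall>i<k. f i = m i) \<Longrightarrow> llen A (m k) \<le> llen A (f k)"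
    by blast
  have mS: "m i \<in> lsums A" and mdec: "m (Suc i) < m i" for i using bad unfolding badseq_def by auto
  have mpos: "0 < m i" for i using lsums_nonneg[OF pos mS[of "Suc i"]] mdec[of i] by simp
  have "\<exists>p. fst p \<in> A \<and> snd p \<in> lsums A \<and> m i = fst p + snd p \<and> llen A (snd p) < llen A (m i)" for i
  proof -
    obtain t where t: "t \<in> lists A" "length t = llen A (m i)" "sum_list t = m i" using llen_ex[OF mS] by blast
    have "t \<noteq> []" using t(3) mpos[of i] by auto
    then obtain a t' where at: "t = a # t'" by (cases t) auto
    have "llen A (sum_list t') \<le> length t'" using llen_le[of t' A] t(1) at by simp
    also have "\<dots> < llen A (m i)" using t(2) at by simp
    finally have "llen A (sum_list t') < llen A (m i)" .
    moreover have "sum_list t' \<in> lsums A" using t(1) at unfolding lsums_def by auto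
    ultimately show ?thesis using t at by (intro exI[of _ "(a, sum_list t')"]) auto
  qed
  then have "\<forall>i. \<exists>p. fst p \<in> A \<and> snd p \<in> lsums A \<and> m i = fst p + snd p \<and> llen A (snd p) < llen A (m i)"
    by blast
  from choice[OF this] obtain P where P: "\<forall>i. fst (P i) \<in> A \<and> snd (P i) \<in> lsums A \<and> m i = fst (P i) + snd (P i) \<and> llen A (snd (P i)) < llen A (m i)"
    by blast
  define a where "a i = fst (P i)" for i
  define y where "y i = snd (P i)" for i
  have aA: "a i \<in> A" and yS: "y i \<in> lsums A" and may: "m i = a i + y i" and ylen: "llen A (y i) < llen A (m i)" for i
    using P unfolding a_def y_def by blast+
  obtain r where r: "strict_mono r" "\<forall>j. a (r j) \<le> a (r (Suc j))"
    using wo_nds[OF woA, of a] aA by blast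
  define f where "f j = (if j < r 0 then m j else y (r (j - r 0)))" for j
  have "badseq (lsums A) f" unfolding badseq_def
  proof (intro conjI allI)
    fix j
    show "f j \<in> lsums A" using mS yS by (simp add: f_def)
    show "f (Suc j) < f j"
    proof (cases "Suc j < r 0")
      case True then show ?thesis using mdec by (simp add: f_def)
    next
      case False
      show ?thesis
      proof (cases "Suc j = r 0")
        case True
        then have "f (Suc j) = y (r 0)" "f j = m j" by (auto simp: f_def)
        moreover have "y (r 0) < m (r 0)" using may[of "r 0"] aA[of "r 0"] pos by auto
        moreover have "m (r 0) < m j" using mdec[of j] True by simp
        ultimately show ?thesis by simp
      next
        case False2: False
        then have j: "r 0 \<le> j" using False by simp
        define t where "t = j - r 0"
        have fj: "f j = y (r t)" "f (Suc j) = y (r (Suc t))" using j by (auto simp: f_def t_def Suc_diff_le)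
        have "r t < r (Suc t)" using r(1) by (simp add: strict_mono_def)
        then have "m (r (Suc t)) < m (r t)" using decr_less[of m] mdec by blast
        moreover have "a (r t) \<le> a (r (Suc t))" using r(2) by blast
        ultimately have "m (r (Suc t)) + a (r t) < m (r t) + a (r (Suc t))"
          by (rule add_less_le_mono)
        then have "m (r (Suc t)) - a (r (Suc t)) < m (r t) - a (r t)"
          by (simp add: algebra_simps)
        then show ?thesis using fj may by (simp add: algebra_simps)
      qed
    qed
  qed
  moreover have "\<forall>i<r 0. f i = m i" by (simp add: f_def)
  ultimately have "llen A (m (r 0)) \<le> llen A (f (r 0))" using minm by blast
  moreover have "f (r 0) = y (r 0)" by (simp add: f_def)
  ultimately show False using ylen[of "r 0"] by simp
qed

lemma wo_wf:
  fixes S :: "'a::linorder set"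
  assumes "wo S" shows "wf {(x, y). x \<in> S \<and> y \<in> S \<and> x < y}"
proof -
  have "\<not> (\<exists>f. \<forall>i. (f (Suc i), f i) \<in> {(x, y). x \<in> S \<and> y \<in> S \<and> x < y})"
  proof
    assume "\<exists>f. \<forall>i. (f (Suc i), f i) \<in> {(x, y). x \<in> S \<and> y \<in> S \<and> x < y}"
    then obtain f where f: "\<forall>i. f (Suc i) \<in> S \<and> f i \<in> S \<and> f (Suc i) < f i" by auto
    then have "(\<forall>i. f i \<in> S) \<and> (\<forall>i. f (Suc i) < f i)" by blast
    then show False using assms wo_no_decr by blast
  qed
  then show ?thesis using wf_iff_no_infinite_down_chain by blast
qed

definition lsol :: "'a::monoid_add set \<Rightarrow> 'a \<Rightarrow> 'a list set" where
  "lsol A b = {t \<in> lists A. sum_list t = b}"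

lemma lsol_decomp:
  fixes A :: "'a::ab_group_add set"
  shows "lsol A b = (if b = 0 then {[]} else {}) \<union> (\<Union>a\<in>{a\<in>A. b - a \<in> lsums A}. (Cons a) ` lsol A (b - a))"
proof (intro equalityI subsetI)
  fix t assume t: "t \<in> lsol A b"
  show "t \<in> (if b = 0 then {[]} else {}) \<union> (\<Union>a\<in>{a\<in>A. b - a \<in> lsums A}. (Cons a) ` lsol A (b - a))"
  proof (cases t)
    case Nil then show ?thesis using t by (simp add: lsol_def)
  next
    case (Cons a t')
    then have "a \<in> A" "t' \<in> lists A" "sum_list t' = b - a" using t by (auto simp: lsol_def algebra_simps)
    then have "b - a \<in> lsums A" "t' \<in> lsol A (b - a)" unfolding lsums_def lsol_def by (auto intro!: exI[of _ t'])
    then show ?thesis using Cons \<open>a \<in> A\<close> by blast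
  qed
next
  fix t assume "t \<in> (if b = 0 then {[]} else {}) \<union> (\<Union>a\<in>{a\<in>A. b - a \<in> lsums A}. (Cons a) ` lsol A (b - a))"
  then show "t \<in> lsol A b" by (auto simp: lsol_def split: if_splits)
qed

lemma finite_lsol:
  fixes A :: "'a::linordered_ab_group_add set"
  assumes pos: "A \<subseteq> {a. 0 < a}" and woA: "wo A"
  shows "finite (lsol A b)"
proof -
  have woS: "wo (lsums A)" using neumann_wo[OF pos woA] .
  show ?thesis
  proof (induction b rule: wf_induct_rule[OF wo_wf[OF woS]])
    case (1 b)
    show ?case
    proof (cases "b \<in> lsums A")
      case False
      then have "lsol A b = {}" unfolding lsol_def lsums_def by auto
      then show ?thesis by simp
    next
      case True
      have fin: "finite {a\<in>A. b - a \<in> lsums A}" using finite_decomp[OF woA woS] .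
      have "finite (lsol A (b - a))" if "a \<in> A" "b - a \<in> lsums A" for a
        apply (rule 1)
        using that True pos by auto
      then show ?thesis
        by (subst lsol_decomp) (use fin in auto)
    qed
  qed
qed

definition supp :: "('a \<Rightarrow> 'k::zero) \<Rightarrow> 'a set" where
  "supp f = {x. f x \<noteq> 0}"

lemma is_MN_supp: "is_MN f \<longleftrightarrow> wo (supp f)"
  by (simp add: is_MN_wo supp_def)

lemma mn_mult_supp: "mn_mult f g x \<noteq> 0 \<Longrightarrow> x \<in> setplus (supp f) (supp g)"
proof (rule ccontr)
  assume a: "mn_mult f g x \<noteq> 0" "x \<notin> setplus (supp f) (supp g)"
  have e: "{(\<alpha>, \<beta>). f \<alpha> \<noteq> 0 \<and> g \<beta> \<noteq> 0 \<and> \<alpha> + \<beta> = x} = {}"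
    using a(2) unfolding setplus_def supp_def by blast
  have "mn_mult f g x = 0" unfolding mn_mult_def e by simp
  then show False using a(1) by simp
qed

lemma is_MN_mult:
  fixes f g :: "'a::linordered_ab_group_add \<Rightarrow> 'k::comm_ring_1"
  assumes "is_MN f" "is_MN g" shows "is_MN (mn_mult f g)"
proof -
  have "supp (mn_mult f g) \<subseteq> setplus (supp f) (supp g)"
    using mn_mult_supp unfolding supp_def[of "mn_mult f g"] by blast
  then show ?thesis using wo_setplus assms wo_subset unfolding is_MN_supp by blast
qed

lemma mn_mult_eq:
  fixes f g :: "'a::linordered_ab_group_add \<Rightarrow> 'k::comm_ring_1"
  assumes "is_MN f" "is_MN g" "finite X" "\<And>a. f a \<noteq> 0 \<Longrightarrow> g (x - a) \<noteq> 0 \<Longrightarrow> a \<in> X"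
  shows "mn_mult f g x = (\<Sum>a\<in>X. f a * g (x - a))"
proof -
  let ?P = "{(\<alpha>, \<beta>). f \<alpha> \<noteq> 0 \<and> g \<beta> \<noteq> 0 \<and> \<alpha> + \<beta> = x}"
  let ?Y = "{a. f a \<noteq> 0 \<and> g (x - a) \<noteq> 0}"
  have "?P = (\<lambda>a. (a, x - a)) ` ?Y" by (auto simp: algebra_simps image_iff)
  moreover have "inj_on (\<lambda>a. (a, x - a)) ?Y" by (auto simp: inj_on_def)
  ultimately have "mn_mult f g x = (\<Sum>a\<in>?Y. f a * g (x - a))"
    unfolding mn_mult_def by (simp add: sum.reindex)
  also have "\<dots> = (\<Sum>a\<in>X. f a * g (x - a))"
    by (rule sum.mono_neutral_left) (use assms(3,4) in auto)
  finally show ?thesis .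
qed

lemma finite_conv_set:
  fixes f g :: "'a::linordered_ab_group_add \<Rightarrow> 'k::zero"
  assumes "is_MN f" "is_MN g"
  shows "finite {a. f a \<noteq> 0 \<and> g (x - a) \<noteq> 0}"
proof -
  have "finite {a\<in>supp f. x - a \<in> supp g}"
    using finite_decomp assms unfolding is_MN_supp by blast
  then show ?thesis by (simp add: supp_def)
qed

lemma mn_mult_comm: "mn_mult f g = mn_mult g (f :: 'a::ab_group_add \<Rightarrow> 'k::comm_ring_1)"
proof
  fix x
  show "mn_mult f g x = mn_mult g f x"
    unfolding mn_mult_def
    by (rule sum.reindex_bij_witness[of _ "\<lambda>(a, b). (b, a)" "\<lambda>(a, b). (b, a)"])
       (auto simp: algebra_simps)
qed

lemma is_MN_one: "is_MN (mn_one :: 'a::linordered_ab_group_add \<Rightarrow> 'k::{zero,one})"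
proof -
  have "supp (mn_one :: 'a \<Rightarrow> 'k) \<subseteq> {0}" by (auto simp: supp_def mn_one_def)
  then show ?thesis unfolding is_MN_supp using wo_finite wo_subset by (metis finite.emptyI finite.insertI)
qed

lemma mn_mult_one:
  fixes g :: "'a::linordered_ab_group_add \<Rightarrow> 'k::comm_ring_1"
  assumes "is_MN g" shows "mn_mult mn_one g = g"
proof
  fix x
  have "mn_mult mn_one g x = (\<Sum>a\<in>{0}. mn_one a * g (x - a))"
    by (rule mn_mult_eq[OF is_MN_one assms]) (auto simp: mn_one_def split: if_splits)
  then show "mn_mult mn_one g x = g x" by (simp add: mn_one_def)
qed

lemma is_MN_add:
  fixes f g :: "'a::linordered_ab_group_add \<Rightarrow> 'k::comm_ring_1"
  assumes "is_MN f" "is_MN g" shows "is_MN (\<lambda>x. f x + g x)"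
proof -
  have "supp (\<lambda>x. f x + g x) \<subseteq> supp f \<union> supp g" by (auto simp: supp_def)
  then show ?thesis using assms wo_Un wo_subset unfolding is_MN_supp by blast
qed

lemma is_MN_uminus:
  fixes f :: "'a::linordered_ab_group_add \<Rightarrow> 'k::comm_ring_1"
  assumes "is_MN f" shows "is_MN (\<lambda>x. - f x)"
  using assms unfolding is_MN_supp supp_def by simp

lemma is_MN_zero: "is_MN (\<lambda>x. 0 :: 'k::zero)"
  by (simp add: is_MN_def)

lemma mn_mult_distrib:
  fixes f g h :: "'a::linordered_ab_group_add \<Rightarrow> 'k::comm_ring_1"
  assumes "is_MN f" "is_MN g" "is_MN h"
  shows "mn_mult f (\<lambda>x. g x + h x) x = mn_mult f g x + mn_mult f h x"
proof -
  let ?X = "{a. f a \<noteq> 0 \<and> g (x - a) \<noteq> 0} \<union> {a. f a \<noteq> 0 \<and> h (x - a) \<noteq> 0}"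
  have fin: "finite ?X" using finite_conv_set assms by blast
  have "mn_mult f (\<lambda>x. g x + h x) x = (\<Sum>a\<in>?X. f a * (g (x - a) + h (x - a)))"
    by (rule mn_mult_eq[OF assms(1) is_MN_add[OF assms(2,3)] fin]) auto
  moreover have "mn_mult f g x = (\<Sum>a\<in>?X. f a * g (x - a))"
    by (rule mn_mult_eq[OF assms(1,2) fin]) auto
  moreover have "mn_mult f h x = (\<Sum>a\<in>?X. f a * h (x - a))"
    by (rule mn_mult_eq[OF assms(1,3) fin]) auto
  ultimately show ?thesis by (simp add: sum.distrib algebra_simps)
qed

lemma mn_mult_assoc:
  fixes f g h :: "'a::linordered_ab_group_add \<Rightarrow> 'k::comm_ring_1"
  assumes f: "is_MN f" and g: "is_MN g" and h: "is_MN h"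
  shows "mn_mult (mn_mult f g) h x = mn_mult f (mn_mult g h) x"
proof -
  have wf: "wo (supp f)" and wg: "wo (supp g)" and wh: "wo (supp h)" using assms by (simp_all add: is_MN_supp)
  define X where "X = {b\<in>setplus (supp f) (supp g). x - b \<in> supp h}"
  define Y where "Y = {a\<in>supp f. x - a \<in> setplus (supp g) (supp h)}"
  have finX: "finite X" unfolding X_def by (rule finite_decomp[OF wo_setplus[OF wf wg] wh])
  have finY: "finite Y" unfolding Y_def by (rule finite_decomp[OF wf wo_setplus[OF wg wh]])
  have fg: "is_MN (mn_mult f g)" and gh: "is_MN (mn_mult g h)" using is_MN_mult assms by blast+
  have "mn_mult (mn_mult f g) h x = (\<Sum>b\<in>X. mn_mult f g b * h (x - b))"
    by (rule mn_mult_eq[OF fg h finX]) (use mn_mult_supp in \<open>auto simp: X_def supp_def\<close>)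
  also have "\<dots> = (\<Sum>b\<in>X. (\<Sum>a\<in>Y. f a * g (b - a)) * h (x - b))"
  proof (rule sum.cong[OF refl])
    fix b assume b: "b \<in> X"
    have "mn_mult f g b = (\<Sum>a\<in>Y. f a * g (b - a))"
    proof (rule mn_mult_eq[OF f g finY])
      fix a assume "f a \<noteq> 0" "g (b - a) \<noteq> 0"
      moreover have "h (x - b) \<noteq> 0" using b by (simp add: X_def supp_def)
      moreover have "x - a = (b - a) + (x - b)" by (simp add: algebra_simps)
      ultimately show "a \<in> Y" unfolding Y_def setplus_def supp_def by blast
    qed
    then show "mn_mult f g b * h (x - b) = (\<Sum>a\<in>Y. f a * g (b - a)) * h (x - b)" by simp
  qed
  also have "\<dots> = (\<Sum>a\<in>Y. \<Sum>b\<in>X. f a * g (b - a) * h (x - b))"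
    by (simp add: sum_distrib_right sum.swap[of _ X Y])
  also have "\<dots> = (\<Sum>a\<in>Y. f a * mn_mult g h (x - a))"
  proof (rule sum.cong[OF refl])
    fix a assume a: "a \<in> Y"
    have "mn_mult g h (x - a) = (\<Sum>d\<in>(\<lambda>b. b - a) ` X. g d * h (x - a - d))"
    proof (rule mn_mult_eq[OF g h finite_imageI[OF finX]])
      fix d assume d: "g d \<noteq> 0" "h (x - a - d) \<noteq> 0"
      have "f a \<noteq> 0" using a by (simp add: Y_def supp_def)
      then have "a + d \<in> setplus (supp f) (supp g)" unfolding setplus_def supp_def using d(1) by blast
      moreover have "x - (a + d) \<in> supp h" using d(2) by (simp add: supp_def diff_diff_eq)
      ultimately have "a + d \<in> X" unfolding X_def by blast
      then show "d \<in> (\<lambda>b. b - a) ` X" by (auto simp: image_iff intro!: bexI[of _ "a + d"])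
    qed
    also have "\<dots> = (\<Sum>b\<in>X. g (b - a) * h (x - b))"
      by (subst sum.reindex) (auto simp: inj_on_def algebra_simps)
    finally show "(\<Sum>b\<in>X. f a * g (b - a) * h (x - b)) = f a * mn_mult g h (x - a)"
      by (simp add: sum_distrib_left mult.assoc)
  qed
  also have "\<dots> = mn_mult f (mn_mult g h) x"
    by (rule mn_mult_eq[OF f gh finY, symmetric]) (use mn_mult_supp in \<open>auto simp: Y_def supp_def\<close>)
  finally show ?thesis .
qed

lemma mn_mult_distrib_right:
  fixes f g h :: "'a::linordered_ab_group_add \<Rightarrow> 'k::comm_ring_1"
  assumes "is_MN f" "is_MN g" "is_MN h"
  shows "mn_mult (\<lambda>x. f x + g x) h = (\<lambda>x. mn_mult f h x + mn_mult g h x)"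
  using assms by (simp add: mn_mult_comm[of _ h] mn_mult_distrib[OF assms(3,1,2)] fun_eq_iff)

typedef (overloaded) ('a::linordered_ab_group_add, 'k::field) mns = "{f :: 'a \<Rightarrow> 'k. is_MN f}"
  morphisms coef Abs_mns
  by (intro exI[of _ "\<lambda>_. 0"]) (simp add: is_MN_def)

setup_lifting type_definition_mns

lemma coef_MN: "is_MN (coef f)" using coef by blast

lemma coef_inject': "f = g \<longleftrightarrow> (\<forall>x. coef f x = coef g x)"
  by (metis coef_inject ext)

instantiation mns :: (linordered_ab_group_add, field) comm_ring_1
begin
lift_definition zero_mns :: "('a, 'b) mns" is "\<lambda>_. 0" by (rule is_MN_zero)
lift_definition one_mns :: "('a, 'b) mns" is "mn_one" by (rule is_MN_one)
lift_definition plus_mns :: "('a, 'b) mns \<Rightarrow> ('a, 'b) mns \<Rightarrow> ('a, 'b) mns" is "\<lambda>f g x. f x + g x"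
  by (rule is_MN_add)
lift_definition uminus_mns :: "('a, 'b) mns \<Rightarrow> ('a, 'b) mns" is "\<lambda>f x. - f x"
  by (rule is_MN_uminus)
lift_definition minus_mns :: "('a, 'b) mns \<Rightarrow> ('a, 'b) mns \<Rightarrow> ('a, 'b) mns" is "\<lambda>f g x. f x - g x"
  by (simp only: diff_conv_add_uminus, rule is_MN_add, assumption, rule is_MN_uminus)
lift_definition times_mns :: "('a, 'b) mns \<Rightarrow> ('a, 'b) mns \<Rightarrow> ('a, 'b) mns" is "mn_mult"
  by (rule is_MN_mult)
instance
proof
  fix a b c :: "('a, 'b) mns"
  show "a * b * c = a * (b * c)" by transfer (rule ext, rule mn_mult_assoc)
  show "a * b = b * a" by transfer (rule mn_mult_comm)
  show "1 * a = a" by transfer (rule mn_mult_one)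
  show "a + b + c = a + (b + c)" by transfer (simp add: algebra_simps)
  show "a + b = b + a" by transfer (simp add: algebra_simps)
  show "0 + a = a" by transfer simp
  show "- a + a = 0" by transfer simp
  show "a - b = a + - b" by transfer simp
  show "(a + b) * c = a * c + b * c"
    by transfer (rule mn_mult_distrib_right)
  show "(0::('a, 'b) mns) \<noteq> 1" by transfer (auto simp: mn_one_def fun_eq_iff)
qed
end

lemma coef_zero[simp]: "coef 0 = (\<lambda>_. 0)" by transfer simp
lemma coef_one: "coef 1 = mn_one" by transfer simp
lemma coef_add[simp]: "coef (f + g) x = coef f x + coef g x" by transfer simp
lemma coef_minus[simp]: "coef (f - g) x = coef f x - coef g x" by transfer simp
lemma coef_uminus[simp]: "coef (- f) x = - coef f x" by transfer simp
lemma coef_mult: "coef (f * g) = mn_mult (coef f) (coef g)" by transfer simp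

lemma coef_sum: "coef (sum F A) x = (\<Sum>a\<in>A. coef (F a) x)"
  by (induction A rule: infinite_finite_induct) auto

lemma wo_shift:
  fixes S :: "'a::linordered_ab_group_add set"
  assumes "wo S" shows "wo ((\<lambda>x. x + c) ` S)"
proof -
  have "\<not>(\<exists>f. (\<forall>i. f i \<in> (\<lambda>x. x + c) ` S) \<and> (\<forall>i. f (Suc i) < f i))"
  proof
    assume "\<exists>f. (\<forall>i. f i \<in> (\<lambda>x. x + c) ` S) \<and> (\<forall>i. f (Suc i) < f i)"
    then obtain f where f: "\<forall>i. f i \<in> (\<lambda>x. x + c) ` S" "\<forall>i. f (Suc i) < f i" by blast
    have "\<forall>i. f i - c \<in> S"
    proof
      fix i
      obtain x where "x \<in> S" "f i = x + c" using f(1) by blast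
      then show "f i - c \<in> S" by simp
    qed
    moreover have "\<forall>i. f (Suc i) - c < f i - c" using f(2) by simp
    ultimately have "\<exists>g. (\<forall>i. g i \<in> S) \<and> (\<forall>i. g (Suc i) < g i)"
      by (intro exI[of _ "\<lambda>i. f i - c"]) simp
    then show False using assms wo_no_decr by blast
  qed
  then show ?thesis using wo_no_decr by blast
qed

lemma wo_least:
  fixes S :: "'a::linorder set"
  assumes "wo S" "S \<noteq> {}" shows "\<exists>m\<in>S. \<forall>s\<in>S. m \<le> s"
  using assms unfolding wo_def by blast

definition Wfun :: "('a::linordered_ab_group_add \<Rightarrow> 'k::field) \<Rightarrow> 'a \<Rightarrow> 'k" where
  "Wfun h b = (\<Sum>t\<in>lsol (supp h) b. prod_list (map (\<lambda>x. - h x) t))"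

lemma Wfun_supp: "Wfun h b \<noteq> 0 \<Longrightarrow> b \<in> lsums (supp h)"
proof (rule ccontr)
  assume a: "Wfun h b \<noteq> 0" "b \<notin> lsums (supp h)"
  then have "lsol (supp h) b = {}" unfolding lsol_def lsums_def by blast
  then show False using a(1) unfolding Wfun_def by simp
qed

lemma sum_lsol_decomp:
  fixes A :: "'a::linordered_ab_group_add set"
  assumes pos: "A \<subseteq> {a. 0 < a}" and woA: "wo A"
  shows "(\<Sum>t\<in>lsol A b. \<Phi> t) = (if b = 0 then \<Phi> [] else 0) +
           (\<Sum>a\<in>{a\<in>A. b - a \<in> lsums A}. \<Sum>t\<in>lsol A (b - a). \<Phi> (a # t))"
proof -
  let ?I = "{a\<in>A. b - a \<in> lsums A}"
  let ?E = "(if b = 0 then {[]} else {}) :: 'a list set"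
  have finI: "finite ?I" using finite_decomp[OF woA neumann_wo[OF pos woA]] .
  have fin: "finite (lsol A c)" for c using finite_lsol[OF pos woA] .
  have "(\<Sum>t\<in>lsol A b. \<Phi> t) = (\<Sum>t\<in>?E \<union> (\<Union>a\<in>?I. (Cons a) ` lsol A (b - a)). \<Phi> t)"
    by (subst lsol_decomp) simp
  also have "\<dots> = (\<Sum>t\<in>?E. \<Phi> t) + (\<Sum>t\<in>(\<Union>a\<in>?I. (Cons a) ` lsol A (b - a)). \<Phi> t)"
    by (rule sum.union_disjoint) (use finI fin in auto)
  also have "(\<Sum>t\<in>(\<Union>a\<in>?I. (Cons a) ` lsol A (b - a)). \<Phi> t) = (\<Sum>a\<in>?I. \<Sum>t\<in>(Cons a) ` lsol A (b - a). \<Phi> t)"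
    by (rule sum.UNION_disjoint) (use finI fin in auto)
  also have "\<dots> = (\<Sum>a\<in>?I. \<Sum>t\<in>lsol A (b - a). \<Phi> (a # t))"
    by (rule sum.cong[OF refl]) (simp add: sum.reindex)
  finally show ?thesis by simp
qed

lemma neumann_inverse:
  fixes h :: "'a::linordered_ab_group_add \<Rightarrow> 'k::field"
  assumes mn: "is_MN h" and pos: "supp h \<subseteq> {a. 0 < a}"
  shows "is_MN (Wfun h)" "mn_mult (\<lambda>x. mn_one x + h x) (Wfun h) = mn_one"
proof -
  let ?A = "supp h"
  have woA: "wo ?A" using mn by (simp add: is_MN_supp)
  have woS: "wo (lsums ?A)" using neumann_wo[OF pos woA] .
  show mnW: "is_MN (Wfun h)" unfolding is_MN_supp
    by (rule wo_subset[OF woS]) (use Wfun_supp[of h] in \<open>auto simp: supp_def[of "Wfun h"]\<close>)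
  have h0: "h 0 = 0" using pos by (auto simp: supp_def)
  show "mn_mult (\<lambda>x. mn_one x + h x) (Wfun h) = mn_one"
  proof
    fix b
    let ?I = "{a\<in>?A. b - a \<in> lsums ?A}"
    have finI: "finite ?I" using finite_decomp[OF woA woS] .
    have "0 \<notin> ?I" using h0 by (simp add: supp_def)
    have "mn_mult (\<lambda>x. mn_one x + h x) (Wfun h) b = (\<Sum>a\<in>insert 0 ?I. (mn_one a + h a) * Wfun h (b - a))"
    proof (rule mn_mult_eq[OF is_MN_add[OF is_MN_one mn] mnW])
      show "finite (insert 0 ?I)" using finI by simp
      fix a assume "mn_one a + h a \<noteq> 0" "Wfun h (b - a) \<noteq> 0"
      then show "a \<in> insert 0 ?I" using Wfun_supp by (auto simp: mn_one_def supp_def split: if_splits)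
    qed
    also have "\<dots> = Wfun h b + (\<Sum>a\<in>?I. h a * Wfun h (b - a))"
      using \<open>0 \<notin> ?I\<close> finI h0
      by (simp add: sum.insert mn_one_def) (rule sum.cong, auto simp: supp_def)
    also have "Wfun h b = (if b = 0 then 1 else 0) - (\<Sum>a\<in>?I. h a * Wfun h (b - a))"
      unfolding Wfun_def
      by (subst sum_lsol_decomp[OF pos woA]) (simp add: sum_distrib_left sum_negf)
    finally show "mn_mult (\<lambda>x. mn_one x + h x) (Wfun h) b = mn_one b"
      by (simp add: mn_one_def)
  qed
qed

lift_definition mon :: "'k::field \<Rightarrow> 'a::linordered_ab_group_add \<Rightarrow> ('a, 'k) mns" is
  "\<lambda>c a x. if x = a then c else 0"
proof -
  fix c :: 'k and a :: 'a
  have "supp (\<lambda>x. if x = a then c else 0) \<subseteq> {a}" by (auto simp: supp_def)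
  then show "is_MN (\<lambda>x. if x = a then c else 0)" unfolding is_MN_supp
    by (meson finite.emptyI finite.insertI wo_finite wo_subset)
qed

lemma coef_mon_mult: "coef (mon c a * f) x = c * coef f (x - a)"
proof -
  have "coef (mon c a * f) x = (\<Sum>b\<in>{a}. coef (mon c a) b * coef f (x - b))"
    unfolding coef_mult
    by (rule mn_mult_eq[OF coef_MN coef_MN]) (auto simp: mon.rep_eq split: if_splits)
  then show ?thesis by (simp add: mon.rep_eq)
qed

lemma mon_mult: "mon c a * mon d b = mon (c * d) (a + b)"
  by (simp add: coef_inject' coef_mon_mult mon.rep_eq algebra_simps)

lemma mon_one: "mon 1 0 = 1"
  by (simp add: coef_inject' mon.rep_eq coef_one mn_one_def)

lemma mon_add: "mon (c + d) a = mon c a + mon d a"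
  by (simp add: coef_inject' mon.rep_eq)

lemma mon_uminus: "mon (- c) a = - mon c a"
  by (simp add: coef_inject' mon.rep_eq)

lemma mon_zero: "mon 0 a = 0"
  by (simp add: coef_inject' mon.rep_eq)

lemma mon_of_nat: "mon (of_nat k) 0 = of_nat k"
  by (induction k) (simp_all add: mon_zero mon_add mon_one)

lemma mon_of_int: "mon (of_int k) 0 = of_int k"
proof (cases k rule: int_cases)
  case (nonneg n) then show ?thesis using mon_of_nat[of n] by simp
next
  case (neg n) then show ?thesis
    by (simp only: of_int_minus of_int_of_nat_eq mon_uminus mon_of_nat)
qed

lemma coef_of_int_mult: "coef (of_int k * f) x = of_int k * coef f x"
  using coef_mon_mult[of "of_int k" 0 f x] by (simp add: mon_of_int)

lemma mns_inv_ex: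
  fixes f :: "('a::linordered_ab_group_add, 'k::field) mns"
  assumes "f \<noteq> 0" shows "\<exists>g. f * g = 1"
proof -
  have "supp (coef f) \<noteq> {}" using assms by (auto simp: supp_def coef_inject')
  then obtain m where m: "m \<in> supp (coef f)" "\<forall>s\<in>supp (coef f). m \<le> s"
    using wo_least coef_MN is_MN_supp by blast
  define c where "c = coef f m"
  have c0: "c \<noteq> 0" using m(1) by (simp add: c_def supp_def)
  define h where "h x = (if x = 0 then 0 else coef f (x + m) / c)" for x
  have supph: "supp h \<subseteq> (\<lambda>x. x + (- m)) ` supp (coef f)"
  proof
    fix x assume "x \<in> supp h"
    then have "coef f (x + m) \<noteq> 0" by (auto simp: h_def supp_def split: if_splits)
    then show "x \<in> (\<lambda>x. x + (- m)) ` supp (coef f)"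
      by (intro image_eqI[of _ _ "x + m"]) (simp_all add: supp_def)
  qed
  have mnh: "is_MN h" unfolding is_MN_supp
    using wo_subset[OF wo_shift[of "supp (coef f)" "- m"] supph] coef_MN is_MN_supp by blast
  have posh: "supp h \<subseteq> {a. 0 < a}"
  proof
    fix x assume x: "x \<in> supp h"
    then have "x \<noteq> 0" "coef f (x + m) \<noteq> 0" by (auto simp: h_def supp_def split: if_splits)
    then have "m \<le> x + m" using m(2) by (auto simp: supp_def)
    then show "x \<in> {a. 0 < a}" using \<open>x \<noteq> 0\<close> by auto
  qed
  define H where "H = Abs_mns h"
  define W where "W = Abs_mns (Wfun h)"
  have cH: "coef H = h" unfolding H_def using mnh by (simp add: Abs_mns_inverse)
  have cW: "coef W = Wfun h" unfolding W_def using neumann_inverse[OF mnh posh] by (simp add: Abs_mns_inverse)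
  have HW: "(1 + H) * W = 1"
  proof -
    have c1H: "coef (1 + H) = (\<lambda>x. mn_one x + h x)" by (simp add: fun_eq_iff cH coef_one)
    have "coef ((1 + H) * W) = mn_mult (\<lambda>x. mn_one x + h x) (Wfun h)"
      by (simp only: coef_mult c1H cW)
    then show ?thesis using neumann_inverse(2)[OF mnh posh] by (simp add: coef_inject' coef_one)
  qed
  have fdec: "f = mon c m * (1 + H)"
  proof -
    have "coef f x = coef (mon c m * (1 + H)) x" for x
      using c0 by (auto simp: coef_mon_mult cH coef_one mn_one_def h_def c_def)
    then show ?thesis by (simp add: coef_inject')
  qed
  have "f * (mon (inverse c) (- m) * W) = (mon c m * mon (inverse c) (- m)) * ((1 + H) * W)"
    by (simp add: fdec algebra_simps)
  also have "\<dots> = 1" using c0 by (simp add: HW mon_mult mon_one)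
  finally show ?thesis by blast
qed

instantiation mns :: (linordered_ab_group_add, field) field
begin
definition inverse_mns :: "('a, 'b) mns \<Rightarrow> ('a, 'b) mns" where
  "inverse_mns f = (if f = 0 then 0 else (SOME g. f * g = 1))"
definition divide_mns_def: "f div g = f * inverse (g :: ('a, 'b) mns)"
instance
proof
  fix a :: "('a, 'b) mns"
  assume a: "a \<noteq> 0"
  have "a * (SOME g. a * g = 1) = 1" using mns_inv_ex[OF a] by (rule someI_ex)
  then show "inverse a * a = 1" unfolding inverse_mns_def using a by (simp add: mult.commute)
next
  fix a b :: "('a, 'b) mns"
  show "a div b = a * inverse b" by (simp add: divide_mns_def)
next
  show "inverse 0 = (0 :: ('a, 'b) mns)" by (simp add: inverse_mns_def)
qed
end

lemma mn_inv_coef: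
  fixes f :: "('a::linordered_ab_group_add, 'k::field) mns"
  assumes "f \<noteq> 0" shows "mn_inv (coef f) = coef (inverse f)"
  unfolding mn_inv_def
proof (rule the_equality)
  show "is_MN (coef (inverse f)) \<and> mn_mult (coef f) (coef (inverse f)) = mn_one"
    using assms by (simp add: coef_MN coef_mult[symmetric] coef_one)
  fix h assume h: "is_MN h \<and> mn_mult (coef f) h = mn_one"
  then have "coef (f * Abs_mns h) = coef 1" by (simp add: coef_mult Abs_mns_inverse coef_one)
  then have "f * Abs_mns h = 1" using coef_inject by blast
  then have "Abs_mns h = inverse f" using assms by (metis field_class.field_inverse mult.left_commute mult.right_neutral mult.commute)
  then show "h = coef (inverse f)" using h by (metis Abs_mns_inverse mem_Collect_eq)
qed

lemma sum_const_add: "(\<Sum>_<(p::nat) + q. (a::'a::ab_group_add)) = (\<Sum>_<p. a) + (\<Sum>_<q. a)"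
proof (induction q)
  case 0 then show ?case by simp
next
  case (Suc q)
  have "(\<Sum>_<p + Suc q. a) = (\<Sum>_<p + q. a) + a" by (simp add: add_Suc_right)
  then show ?case using Suc by (simp add: algebra_simps)
qed

lemma zmult_diff: "zmult (int p - int q) (a::'a::ab_group_add) = (\<Sum>_<p. a) - (\<Sum>_<q. a)"
proof (cases "q \<le> p")
  case True
  then have e: "int p - int q = int (p - q)" by simp
  have "(\<Sum>_<p. a) = (\<Sum>_<(p - q) + q. a)" using True by simp
  also have "\<dots> = (\<Sum>_<p - q. a) + (\<Sum>_<q. a)" by (rule sum_const_add)
  finally show ?thesis unfolding zmult_def e by simp
next
  case False
  then have e: "int p - int q = - int (q - p)" by simp
  have e2: "nat (int (q - p)) = q - p" by simp
  have "(\<Sum>_<q. a) = (\<Sum>_<(q - p) + p. a)" using False by simp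
  also have "\<dots> = (\<Sum>_<q - p. a) + (\<Sum>_<p. a)" by (rule sum_const_add)
  finally have "(\<Sum>_<q. a) = (\<Sum>_<q - p. a) + (\<Sum>_<p. a)" .
  moreover have "zmult (int p - int q) a = - (\<Sum>_<q - p. a)"
    unfolding zmult_def e using False by (simp only: e2 minus_minus, simp)
  ultimately show ?thesis by (simp add: algebra_simps)
qed

lemma zmult_add: "zmult (k + l) (a::'a::ab_group_add) = zmult k a + zmult l a"
proof -
  have ek: "int (nat k) - int (nat (- k)) = k" and el: "int (nat l) - int (nat (- l)) = l" by simp_all
  have ekl: "int (nat k + nat l) - int (nat (- k) + nat (- l)) = k + l" by simp
  have z1: "zmult k a = (\<Sum>_<nat k. a) - (\<Sum>_<nat (- k). a)"
    using zmult_diff[of "nat k" "nat (- k)" a] unfolding ek .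
  have z2: "zmult l a = (\<Sum>_<nat l. a) - (\<Sum>_<nat (- l). a)"
    using zmult_diff[of "nat l" "nat (- l)" a] unfolding el .
  have z3: "zmult (k + l) a = (\<Sum>_<nat k + nat l. a) - (\<Sum>_<nat (- k) + nat (- l). a)"
    using zmult_diff[of "nat k + nat l" "nat (- k) + nat (- l)" a] unfolding ekl .
  show ?thesis unfolding z3 z1 z2 sum_const_add by (simp add: algebra_simps)
qed

lemma zmult_zero[simp]: "zmult 0 a = 0" by (simp add: zmult_def)

lemma zmult_uminus: "zmult (- k) (a::'a::ab_group_add) = - zmult k a"
  using zmult_add[of "- k" k a] by (simp add: eq_neg_iff_add_eq_0)

lemma zmult_one: "zmult 1 a = a" by (simp add: zmult_def)

lemma hvec_add: "hvec n eps (\<lambda>i. k i + l i) = hvec n eps k + hvec n eps l"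
  by (simp add: hvec_def zmult_add sum.distrib)

lemma hvec_zero: "hvec n eps (\<lambda>i. 0) = 0" by (simp add: hvec_def)

lemma hvec_minus_one: "hvec n eps (\<lambda>i. if i < n then -1 else 0) = - (\<Sum>i<n. eps i)"
  by (simp add: hvec_def zmult_uminus zmult_one sum_negf)

locale dsd =
  fixes G :: "'a::linordered_ab_group_add set" and n :: nat and eps :: "nat \<Rightarrow> 'a"
  assumes dsd: "direct_sum_decomp G n eps"
begin

abbreviation "xd \<equiv> xdeg G n eps"

lemma G0: "0 \<in> G" and Gadd: "a \<in> G \<Longrightarrow> b \<in> G \<Longrightarrow> a + b \<in> G" and Gneg: "a \<in> G \<Longrightarrow> - a \<in> G"
  using dsd unfolding direct_sum_decomp_def by blast+

lemma ex1: "\<exists>!p. fst p \<in> G \<and> snd p \<in> exps n \<and> x = fst p + hvec n eps (snd p)"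
  using dsd unfolding direct_sum_decomp_def by blast

lemma xd_spec: "\<exists>g\<in>G. xd x \<in> exps n \<and> x = g + hvec n eps (xd x)"
proof -
  obtain p where p: "fst p \<in> G \<and> snd p \<in> exps n \<and> x = fst p + hvec n eps (snd p)"
    and u: "\<And>q. fst q \<in> G \<and> snd q \<in> exps n \<and> x = fst q + hvec n eps (snd q) \<Longrightarrow> q = p"
    using ex1[of x] by (elim ex1E) blast
  have "(THE p. fst p \<in> G \<and> snd p \<in> exps n \<and> x = fst p + hvec n eps (snd p)) = p"
    by (rule the_equality) (use p u in blast)+
  then have "xd x = snd p" unfolding xdeg_def by simp
  then show ?thesis using p by (intro bexI[of _ "fst p"]) auto
qed

lemma xd_unique: assumes "g \<in> G" "k \<in> exps n" shows "xd (g + hvec n eps k) = k"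
proof -
  have "(THE p. fst p \<in> G \<and> snd p \<in> exps n \<and> g + hvec n eps k = fst p + hvec n eps (snd p)) = (g, k)"
    by (rule the1_equality[OF ex1]) (use assms in simp)
  then show ?thesis unfolding xdeg_def by simp
qed

lemma exps_add: "k \<in> exps n \<Longrightarrow> l \<in> exps n \<Longrightarrow> (\<lambda>i. k i + l i) \<in> exps n"
  by (simp add: exps_def)

lemma xd_add: "xd (a + b) = (\<lambda>i. xd a i + xd b i)"
proof -
  obtain g1 where g1: "g1 \<in> G" "xd a \<in> exps n" "a = g1 + hvec n eps (xd a)" using xd_spec by blast
  obtain g2 where g2: "g2 \<in> G" "xd b \<in> exps n" "b = g2 + hvec n eps (xd b)" using xd_spec by blast
  have "a + b = (g1 + g2) + hvec n eps (\<lambda>i. xd a i + xd b i)"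
    by (subst g1(3), subst g2(3)) (simp add: hvec_add algebra_simps)
  then show ?thesis using xd_unique[OF Gadd[OF g1(1) g2(1)] exps_add[OF g1(2) g2(2)]] by simp
qed

lemma xd_zero: "xd 0 = (\<lambda>i. 0)"
  using xd_unique[OF G0, of "\<lambda>i. 0"] by (simp add: hvec_zero exps_def)

lemma xd_diff: "xd (a - b) = (\<lambda>i. xd a i - xd b i)"
proof -
  have "xd a = xd ((a - b) + b)" by simp
  then show ?thesis unfolding xd_add by (simp add: fun_eq_iff)
qed

lemma xd_G: "x \<in> G \<Longrightarrow> xd x = (\<lambda>i. 0)"
  using xd_unique[of x "\<lambda>i. 0"] by (simp add: hvec_zero exps_def)

lemma xd_exps: "xd x \<in> exps n" using xd_spec by blast

lemma xd_sum_list: "xd (sum_list t) = (\<lambda>i. sum_list (map (\<lambda>x. xd x i) t))"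
  by (induction t) (simp_all add: xd_zero xd_add)

lift_definition eul :: "nat \<Rightarrow> ('a, 'k::field) mns \<Rightarrow> ('a, 'k) mns" is
  "\<lambda>j f x. of_int (xdeg G n eps x j) * f x"
proof -
  fix j and f :: "'a \<Rightarrow> 'k" assume "is_MN f"
  moreover have "supp (\<lambda>x. of_int (xdeg G n eps x j) * f x) \<subseteq> supp f" by (auto simp: supp_def)
  ultimately show "is_MN (\<lambda>x. of_int (xdeg G n eps x j) * f x)" unfolding is_MN_supp using wo_subset by blast
qed

lift_definition dv :: "nat \<Rightarrow> ('a, 'k::field) mns \<Rightarrow> ('a, 'k) mns" is
  "\<lambda>j f. mn_deriv G n eps j f"
proof -
  fix j and f :: "'a \<Rightarrow> 'k" assume "is_MN f"
  then have "wo ((\<lambda>x. x + (- eps j)) ` supp f)" using wo_shift is_MN_supp by blast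
  moreover have "supp (mn_deriv G n eps j f) \<subseteq> (\<lambda>x. x + (- eps j)) ` supp f"
  proof
    fix x assume "x \<in> supp (mn_deriv G n eps j f)"
    then have "f (x + eps j) \<noteq> 0" by (auto simp: supp_def mn_deriv_def)
    then show "x \<in> (\<lambda>x. x + (- eps j)) ` supp f"
      by (intro image_eqI[of _ _ "x + eps j"]) (simp_all add: supp_def)
  qed
  ultimately show "is_MN (mn_deriv G n eps j f)" unfolding is_MN_supp using wo_subset by blast
qed

lemma x_dv: "mon 1 (eps j) * dv j f = eul j f"
  by (simp add: coef_inject' coef_mon_mult dv.rep_eq eul.rep_eq mn_deriv_def)

lemma eul_add: "eul j (f + g) = eul j f + eul j g"
  by (simp add: coef_inject' eul.rep_eq algebra_simps)

lemma eul_one: "eul j 1 = 0"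
  by (simp add: coef_inject' eul.rep_eq coef_one mn_one_def xd_zero)

lemma eul_mon_mult: "eul j (mon c m * f) = mon c m * (of_int (xd m j) * f + eul j f)"
proof -
  have "coef (eul j (mon c m * f)) x = coef (mon c m * (of_int (xd m j) * f + eul j f)) x" for x
  proof -
    have "xd x j = xd m j + xd (x - m) j" using xd_add[of m "x - m"] by simp
    then show ?thesis by (simp only: eul.rep_eq coef_mon_mult coef_add coef_of_int_mult) (simp add: algebra_simps)
  qed
  then show ?thesis by (simp add: coef_inject')
qed

end

lemma mn_ord_least:
  fixes f :: "'a::linorder \<Rightarrow> 'k::zero"
  assumes "is_MN f" "f \<noteq> (\<lambda>_. 0)"
  shows "mn_ord f \<in> supp f" "\<forall>s\<in>supp f. mn_ord f \<le> s"
proof -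
  have "supp f \<noteq> {}" using assms(2) by (auto simp: supp_def)
  then obtain m where m: "m \<in> supp f" "\<forall>s\<in>supp f. m \<le> s" using wo_least assms(1) is_MN_supp by blast
  have "mn_ord f = m" unfolding mn_ord_def
    by (rule Least_equality) (use m in \<open>auto simp: supp_def\<close>)
  then show "mn_ord f \<in> supp f" "\<forall>s\<in>supp f. mn_ord f \<le> s" using m by auto
qed

lemma mns_decomp:
  fixes f :: "('a::linordered_ab_group_add, 'k::field) mns"
  assumes "f \<noteq> 0"
  shows "\<exists>c h. c \<noteq> 0 \<and> is_MN h \<and> supp h \<subseteq> {a. 0 < a} \<and> f = mon c (mn_ord (coef f)) * (1 + Abs_mns h)"
proof -
  define m where "m = mn_ord (coef f)"
  have "coef f \<noteq> (\<lambda>_. 0)" using assms by (auto simp: coef_inject')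
  then have m: "m \<in> supp (coef f)" "\<forall>s\<in>supp (coef f). m \<le> s" using mn_ord_least coef_MN m_def by blast+
  define c where "c = coef f m"
  have c0: "c \<noteq> 0" using m(1) by (simp add: c_def supp_def)
  define h where "h x = (if x = 0 then 0 else coef f (x + m) / c)" for x
  have supph: "supp h \<subseteq> (\<lambda>x. x + (- m)) ` supp (coef f)"
  proof
    fix x assume "x \<in> supp h"
    then have "coef f (x + m) \<noteq> 0" by (auto simp: h_def supp_def split: if_splits)
    then show "x \<in> (\<lambda>x. x + (- m)) ` supp (coef f)"
      by (intro image_eqI[of _ _ "x + m"]) (simp_all add: supp_def)
  qed
  have mnh: "is_MN h" unfolding is_MN_supp
    using wo_subset[OF wo_shift[of "supp (coef f)" "- m"] supph] coef_MN is_MN_supp by blast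
  have posh: "supp h \<subseteq> {a. 0 < a}"
  proof
    fix x assume x: "x \<in> supp h"
    then have "x \<noteq> 0" "coef f (x + m) \<noteq> 0" by (auto simp: h_def supp_def split: if_splits)
    then have "m \<le> x + m" using m(2) by (auto simp: supp_def)
    then show "x \<in> {a. 0 < a}" using \<open>x \<noteq> 0\<close> by auto
  qed
  have cH: "coef (Abs_mns h) = h" using mnh by (simp add: Abs_mns_inverse)
  have "coef f x = coef (mon c m * (1 + Abs_mns h)) x" for x
    using c0 by (auto simp: coef_mon_mult cH coef_one mn_one_def h_def c_def)
  then have "f = mon c m * (1 + Abs_mns h)" by (simp add: coef_inject')
  then have "c \<noteq> 0 \<and> is_MN h \<and> supp h \<subseteq> {a. 0 < a} \<and> f = mon c (mn_ord (coef f)) * (1 + Abs_mns h)"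
    using c0 mnh posh unfolding m_def by simp
  then show ?thesis by (intro exI)
qed

lemma inverse_one_plus:
  fixes h :: "'a::linordered_ab_group_add \<Rightarrow> 'k::field"
  assumes mnh: "is_MN h" and posh: "supp h \<subseteq> {a. 0 < a}"
  shows "(1 + Abs_mns h) * Abs_mns (Wfun h) = 1"
proof -
  have cH: "coef (Abs_mns h) = h" using mnh by (simp add: Abs_mns_inverse)
  have cW: "coef (Abs_mns (Wfun h)) = Wfun h" using neumann_inverse[OF mnh posh] by (simp add: Abs_mns_inverse)
  have c1H: "coef (1 + Abs_mns h) = (\<lambda>x. mn_one x + h x)" by (simp add: fun_eq_iff cH coef_one)
  have "coef ((1 + Abs_mns h) * Abs_mns (Wfun h)) = mn_mult (\<lambda>x. mn_one x + h x) (Wfun h)"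
    by (simp only: coef_mult c1H cW)
  then show ?thesis using neumann_inverse(2)[OF mnh posh] by (simp add: coef_inject' coef_one)
qed

definition tup :: "(nat \<Rightarrow> 'a set) \<Rightarrow> nat \<Rightarrow> 'a::comm_monoid_add \<Rightarrow> (nat \<Rightarrow> 'a) set" where
  "tup S n x = {b \<in> PiE {..<n} S. (\<Sum>i<n. b i) = x}"

definition tsums :: "(nat \<Rightarrow> 'a set) \<Rightarrow> nat \<Rightarrow> 'a::comm_monoid_add set" where
  "tsums S n = {(\<Sum>i<n. b i) |b. b \<in> PiE {..<n} S}"

lemma tsumsI: "b \<in> PiE {..<n} S \<Longrightarrow> (\<Sum>i<n. b i) \<in> tsums S n"
  unfolding tsums_def mem_Collect_eq by (rule exI[of _ b]) simp

lemma prod_coef_aux: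
  fixes f :: "nat \<Rightarrow> ('a::linordered_ab_group_add, 'k::field) mns"
  assumes "\<forall>i<n. wo (S i) \<and> supp (coef (f i)) \<subseteq> S i"
  shows "wo (tsums S n) \<and> (\<forall>x. finite (tup S n x) \<and>
           coef (\<Prod>i<n. f i) x = (\<Sum>b\<in>tup S n x. \<Prod>i<n. coef (f i) (b i)))"
  using assms
proof (induction n)
  case 0
  have t0: "tup S 0 x = (if x = 0 then {\<lambda>_. undefined} else {})" for x
    by (auto simp: tup_def)
  have "tsums S 0 = {0}" by (auto simp: tsums_def)
  then show ?case by (simp add: t0 coef_one mn_one_def wo_finite)
next
  case (Suc n)
  have IH: "wo (tsums S n)" "\<And>x. finite (tup S n x)"
    "\<And>x. coef (\<Prod>i<n. f i) x = (\<Sum>b\<in>tup S n x. \<Prod>i<n. coef (f i) (b i))"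
    using Suc by auto
  have woSn: "wo (S n)" and suppn: "supp (coef (f n)) \<subseteq> S n" using Suc.prems by auto
  have sub: "tsums S (Suc n) \<subseteq> setplus (tsums S n) (S n)"
  proof
    fix y assume "y \<in> tsums S (Suc n)"
    then obtain b where b: "b \<in> PiE {..<Suc n} S" "y = (\<Sum>i<Suc n. b i)" unfolding tsums_def by blast
    have "b(n := undefined) \<in> PiE {..<n} S" using b(1) by (auto simp: PiE_def extensional_def Pi_def)
    moreover have "(\<Sum>i<n. (b(n := undefined)) i) = (\<Sum>i<n. b i)" by (rule sum.cong) auto
    ultimately have "(\<Sum>i<n. b i) \<in> tsums S n" using tsumsI by metis
    moreover have "b n \<in> S n" using b(1) by auto
    ultimately show "y \<in> setplus (tsums S n) (S n)" using b(2) unfolding setplus_def by auto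
  qed
  have woS: "wo (tsums S (Suc n))" using wo_subset[OF wo_setplus[OF IH(1) woSn] sub] .
  have "finite (tup S (Suc n) x) \<and>
        coef (\<Prod>i<Suc n. f i) x = (\<Sum>b\<in>tup S (Suc n) x. \<Prod>i<Suc n. coef (f i) (b i))" for x
  proof -
    define Y where "Y = {a\<in>tsums S n. x - a \<in> S n}"
    have finY: "finite Y" unfolding Y_def by (rule finite_decomp[OF IH(1) woSn])
    define j :: "'a \<times> (nat \<Rightarrow> 'a) \<Rightarrow> (nat \<Rightarrow> 'a)" where "j = (\<lambda>(a, b). b(n := x - a))"
    define i where "i = (\<lambda>b::nat \<Rightarrow> 'a. ((\<Sum>i<n. b i), b(n := undefined)))"
    have P: "coef (\<Prod>i<n. f i) a \<noteq> 0 \<Longrightarrow> a \<in> tsums S n" for a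
    proof (rule ccontr)
      assume a: "coef (\<Prod>i<n. f i) a \<noteq> 0" "a \<notin> tsums S n"
      then have "tup S n a = {}" unfolding tup_def tsums_def by blast
      then show False using a(1) IH(3) by simp
    qed
    have "coef (\<Prod>i<Suc n. f i) x = mn_mult (coef (\<Prod>i<n. f i)) (coef (f n)) x"
      by (simp add: coef_mult)
    also have "\<dots> = (\<Sum>a\<in>Y. coef (\<Prod>i<n. f i) a * coef (f n) (x - a))"
    proof (rule mn_mult_eq[OF coef_MN coef_MN finY])
      fix a assume a: "coef (\<Prod>i<n. f i) a \<noteq> 0" "coef (f n) (x - a) \<noteq> 0"
      have "a \<in> tsums S n" using P[OF a(1)] .
      moreover have "x - a \<in> S n" using a(2) suppn unfolding supp_def by blast
      ultimately show "a \<in> Y" unfolding Y_def by simp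
    qed
    also have "\<dots> = (\<Sum>a\<in>Y. \<Sum>b\<in>tup S n a. (\<Prod>i<n. coef (f i) (b i)) * coef (f n) (x - a))"
      by (simp add: IH(3) sum_distrib_right)
    also have "\<dots> = (\<Sum>(a, b)\<in>Sigma Y (tup S n). (\<Prod>i<n. coef (f i) (b i)) * coef (f n) (x - a))"
      by (rule sum.Sigma) (use finY IH(2) in auto)
    also have "\<dots> = (\<Sum>b\<in>tup S (Suc n) x. \<Prod>i<Suc n. coef (f i) (b i))"
    proof (rule sum.reindex_bij_witness[of _ i j])
      fix ab assume ab: "ab \<in> Sigma Y (tup S n)"
      obtain a b where abe: "ab = (a, b)" by (cases ab)
      have b: "b \<in> PiE {..<n} S" "(\<Sum>i<n. b i) = a" "a \<in> Y" using ab abe by (auto simp: tup_def)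
      have bn: "b n = undefined" using b(1) by (auto simp: PiE_def extensional_def)
      have "(\<Sum>i<n. (b(n := x - a)) i) = (\<Sum>i<n. b i)" by (rule sum.cong) auto
      then have s: "(\<Sum>i<n. (b(n := x - a)) i) = a" using b(2) by simp
      show "i (j ab) = ab" using s bn abe by (auto simp: i_def j_def fun_eq_iff)
      have "b(n := x - a) \<in> PiE {..<Suc n} S" using b(1,3) by (auto simp: PiE_def extensional_def Pi_def Y_def)
      moreover have "(\<Sum>i<Suc n. (b(n := x - a)) i) = x" using s by simp
      ultimately show "j ab \<in> tup S (Suc n) x" using abe by (simp add: j_def tup_def)
      have "(\<Prod>i<n. coef (f i) ((b(n := x - a)) i)) = (\<Prod>i<n. coef (f i) (b i))"
        by (rule prod.cong) auto
      then have "(\<Prod>i<Suc n. coef (f i) ((b(n := x - a)) i)) = (\<Prod>i<n. coef (f i) (b i)) * coef (f n) (x - a)"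
        by simp
      then show "(\<Prod>i<Suc n. coef (f i) (j ab i)) = (case ab of (a, b) \<Rightarrow> (\<Prod>i<n. coef (f i) (b i)) * coef (f n) (x - a))"
        using abe by (simp add: j_def)
    next
      fix b assume b: "b \<in> tup S (Suc n) x"
      have b1: "b \<in> PiE {..<Suc n} S" "(\<Sum>i<Suc n. b i) = x" using b by (auto simp: tup_def)
      have bn: "x - (\<Sum>i<n. b i) = b n" using b1(2) by (simp add: algebra_simps)
      show "j (i b) = b" by (simp add: i_def j_def bn)
      have r: "b(n := undefined) \<in> PiE {..<n} S" using b1(1) by (auto simp: PiE_def extensional_def Pi_def)
      have rs: "(\<Sum>i<n. (b(n := undefined)) i) = (\<Sum>i<n. b i)" by (rule sum.cong) auto
      have "(\<Sum>i<n. b i) \<in> tsums S n" using tsumsI[OF r] rs by simp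
      moreover have "b n \<in> S n" using b1(1) by auto
      ultimately have "(\<Sum>i<n. b i) \<in> Y" using bn unfolding Y_def by simp
      moreover have "b(n := undefined) \<in> tup S n (\<Sum>i<n. b i)" using r rs by (simp add: tup_def)
      ultimately show "i b \<in> Sigma Y (tup S n)" by (simp add: i_def)
    qed
    finally have eq: "coef (\<Prod>i<Suc n. f i) x = (\<Sum>b\<in>tup S (Suc n) x. \<Prod>i<Suc n. coef (f i) (b i))" .
    have "tup S (Suc n) x \<subseteq> j ` Sigma Y (tup S n)"
    proof (rule subsetI)
      fix b assume b: "b \<in> tup S (Suc n) x"
      have b1: "b \<in> PiE {..<Suc n} S" "(\<Sum>i<Suc n. b i) = x" using b by (auto simp: tup_def)
      have bn: "x - (\<Sum>i<n. b i) = b n" using b1(2) by (simp add: algebra_simps)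
      have r: "b(n := undefined) \<in> PiE {..<n} S" using b1(1) by (auto simp: PiE_def extensional_def Pi_def)
      have rs: "(\<Sum>i<n. (b(n := undefined)) i) = (\<Sum>i<n. b i)" by (rule sum.cong) auto
      have "(\<Sum>i<n. b i) \<in> tsums S n" using tsumsI[OF r] rs by simp
      moreover have "b n \<in> S n" using b1(1) by auto
      ultimately have "(\<Sum>i<n. b i) \<in> Y" using bn unfolding Y_def by simp
      moreover have "b(n := undefined) \<in> tup S n (\<Sum>i<n. b i)" using r rs by (simp add: tup_def)
      moreover have "j ((\<Sum>i<n. b i), b(n := undefined)) = b" by (simp add: j_def bn)
      ultimately show "b \<in> j ` Sigma Y (tup S n)"
        by (intro image_eqI[of _ _ "((\<Sum>i<n. b i), b(n := undefined))"]) auto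
    qed
    moreover have "finite (Sigma Y (tup S n))" using finY IH(2) by auto
    ultimately have "finite (tup S (Suc n) x)" by (rule finite_subset[OF _ finite_imageI])
    then show ?thesis using eq by blast
  qed
  then show ?case using woS by blast
qed

lemma prod_coef:
  fixes f :: "nat \<Rightarrow> ('a::linordered_ab_group_add, 'k::field) mns"
  assumes "\<And>i. i < n \<Longrightarrow> wo (S i)" "\<And>i. i < n \<Longrightarrow> supp (coef (f i)) \<subseteq> S i"
  shows "finite (tup S n x)" "coef (\<Prod>i<n. f i) x = (\<Sum>b\<in>tup S n x. \<Prod>i<n. coef (f i) (b i))"
  using prod_coef_aux[of n S f] assms by auto

definition ldet :: "nat \<Rightarrow> (nat \<Rightarrow> nat \<Rightarrow> 'r::comm_ring_1) \<Rightarrow> 'r" where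
  "ldet n R = (\<Sum>p\<in>{p. p permutes {..<n}}. of_int (sign p) * (\<Prod>i<n. R i (p i)))"

lemma ldet_det: "ldet n R = det (mat n n (\<lambda>(i, j). R i j))"
  unfolding ldet_def det_def by (simp add: atLeast0LessThan)

lemma ldet_cong: "(\<And>i j. i < n \<Longrightarrow> j < n \<Longrightarrow> R i j = R' i j) \<Longrightarrow> ldet n R = ldet n R'"
  unfolding ldet_def
  by (rule sum.cong[OF refl], rule arg_cong[of _ _ "\<lambda>x. _ * x"], rule prod.cong)
     (auto dest: permutes_in_image)

lemma ldet_identical_rows:
  fixes R :: "nat \<Rightarrow> nat \<Rightarrow> 'r::comm_ring_1"
  assumes "i < n" "i' < n" "i \<noteq> i'" "\<And>j. j < n \<Longrightarrow> R i j = R i' j"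
  shows "ldet n R = 0"
  unfolding ldet_det
  by (rule det_identical_rows[of _ n i i']) (use assms in \<open>auto simp: row_def\<close>)

lemma ldet_scale_rows:
  fixes R :: "nat \<Rightarrow> nat \<Rightarrow> 'r::comm_ring_1"
  shows "ldet n (\<lambda>i j. c i * R i j) = (\<Prod>i<n. c i) * ldet n R"
  unfolding ldet_def
  by (simp add: prod.distrib sum_distrib_left algebra_simps)

lemma ldet_row_sum:
  fixes R :: "nat \<Rightarrow> nat \<Rightarrow> 'r::comm_ring_1"
  assumes "i0 < n" "finite S"
  shows "ldet n (R(i0 := (\<lambda>j. \<Sum>i\<in>S. R i j))) = (\<Sum>i\<in>S. ldet n (R(i0 := R i)))"
proof -
  have *: "(\<Prod>l<n. (R(i0 := v)) l (p l)) = v (p i0) * (\<Prod>l\<in>{..<n} - {i0}. R l (p l))" for v p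
  proof -
    have "(\<Prod>l<n. (R(i0 := v)) l (p l)) = (R(i0 := v)) i0 (p i0) * (\<Prod>l\<in>{..<n} - {i0}. (R(i0 := v)) l (p l))"
      using assms(1) by (subst prod.remove[of _ i0]) auto
    also have "(\<Prod>l\<in>{..<n} - {i0}. (R(i0 := v)) l (p l)) = (\<Prod>l\<in>{..<n} - {i0}. R l (p l))"
      by (rule prod.cong) auto
    finally show ?thesis by simp
  qed
  show ?thesis
    unfolding ldet_def * using assms(2)
    by (simp add: sum_distrib_right sum_distrib_left algebra_simps sum.swap[of _ S])
qed

lemma ldet_zero_row:
  fixes R :: "nat \<Rightarrow> nat \<Rightarrow> 'r::comm_ring_1"
  assumes "i0 < n" "\<And>j. j < n \<Longrightarrow> R i0 j = 0"
  shows "ldet n R = 0"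
proof -
  have "(\<Prod>i<n. R i (p i)) = 0" if "p permutes {..<n}" for p
  proof (rule prod_zero)
    have "p i0 < n" using permutes_in_image[OF that] assms(1) by simp
    then show "\<exists>a\<in>{..<n}. R a (p a) = 0" using assms by (intro bexI[of _ i0]) auto
  qed simp
  then show ?thesis unfolding ldet_def by simp
qed

lemma ldet_dep:
  fixes R :: "nat \<Rightarrow> nat \<Rightarrow> 'r::comm_ring_1"
  assumes S: "S \<subseteq> {..<n}" "S \<noteq> {}" and sum0: "\<And>j. j < n \<Longrightarrow> (\<Sum>i\<in>S. R i j) = 0"
  shows "ldet n R = 0"
proof -
  obtain i0 where i0: "i0 \<in> S" using S(2) by blast
  have i0n: "i0 < n" using i0 S(1) by blast
  have fin: "finite S" using S(1) finite_subset by blast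
  have "0 = ldet n (R(i0 := (\<lambda>j. \<Sum>i\<in>S. R i j)))"
    by (rule sym, rule ldet_zero_row[OF i0n]) (simp add: sum0)
  also have "\<dots> = (\<Sum>i\<in>S. ldet n (R(i0 := R i)))" by (rule ldet_row_sum[OF i0n fin])
  also have "\<dots> = ldet n (R(i0 := R i0)) + (\<Sum>i\<in>S - {i0}. ldet n (R(i0 := R i)))"
    using fin i0 by (simp add: sum.remove)
  also have "(\<Sum>i\<in>S - {i0}. ldet n (R(i0 := R i))) = 0"
  proof (rule sum.neutral, rule ballI)
    fix i assume i: "i \<in> S - {i0}"
    then have "i < n" "i \<noteq> i0" using S(1) by auto
    then show "ldet n (R(i0 := R i)) = 0"
      by (intro ldet_identical_rows[of i0 n i]) (use i0n in auto)
  qed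
  finally show ?thesis by simp
qed

lemma perms_hd_sum:
  fixes f :: "'a \<Rightarrow> int"
  assumes "M \<noteq> {#}"
  shows "of_nat (size M) * (\<Sum>t\<in>permutations_of_multiset M. f (hd t)) =
         of_nat (card (permutations_of_multiset M)) * (\<Sum>x\<in>#M. f x)"
proof -
  let ?P = "permutations_of_multiset M"
  have len: "t \<in> ?P \<Longrightarrow> length t = size M" for t by (rule length_finite_permutations_of_multiset)
  have swap: "(\<Sum>t\<in>?P. f (t ! 0)) = (\<Sum>t\<in>?P. f (t ! q))" if q: "q < size M" for q
  proof -
    define sw where "sw t = list_update (list_update t 0 (t ! q)) q (t ! 0)" for t :: "'a list"
    have swl: "length (sw u) = length u" for u by (simp add: sw_def)
    have swn: "i < length u \<Longrightarrow> q < length u \<Longrightarrow> sw u ! i = (if i = q then u ! 0 else if i = 0 then u ! q else u ! i)" for u i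
      unfolding sw_def by (auto simp: nth_list_update)
    have A: "sw (sw t) = t" if t: "t \<in> ?P" for t
    proof (rule nth_equalityI)
      have l: "0 < length t" "q < length t" using len[OF t] q by auto
      show "length (sw (sw t)) = length t" by (simp add: swl)
      fix i assume "i < length (sw (sw t))"
      then have i: "i < length t" by (simp add: swl)
      show "sw (sw t) ! i = t ! i" using swn[of i "sw t"] swn[of i t] swn[of 0 t] swn[of q t] i l swl[of t]
        by (auto split: if_splits)
    qed
    have B: "sw t \<in> ?P" if t: "t \<in> ?P" for t
    proof -
      have l: "0 < length t" "q < length t" using len[OF t] q by auto
      have "mset (sw t) = mset t" using mset_swap[of q t 0] l unfolding sw_def by simp
      then show ?thesis using t by (simp add: permutations_of_multiset_def)
    qed
    have C: "f (sw t ! q) = f (t ! 0)" if t: "t \<in> ?P" for t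
    proof -
      have l: "0 < length t" "q < length t" using len[OF t] q by auto
      then show ?thesis using swn[of q t] by simp
    qed
    show ?thesis
      by (rule sum.reindex_bij_witness[of _ sw sw]) (use A B C in auto)
  qed
  have hd: "hd t = t ! 0" if t: "t \<in> ?P" for t
  proof -
    have "length t = size M" using t by (rule len)
    moreover have "size M \<noteq> 0" using assms by simp
    ultimately show ?thesis by (cases t) auto
  qed
  have "of_nat (size M) * (\<Sum>t\<in>?P. f (hd t)) = (\<Sum>q<size M. \<Sum>t\<in>?P. f (t ! 0))"
    by (simp add: hd)
  also have "\<dots> = (\<Sum>q<size M. \<Sum>t\<in>?P. f (t ! q))" by (rule sum.cong[OF refl]) (simp add: swap)
  also have "\<dots> = (\<Sum>t\<in>?P. \<Sum>q<size M. f (t ! q))" by (rule sum.swap)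
  also have "\<dots> = (\<Sum>t\<in>?P. \<Sum>x\<in>#M. f x)"
  proof (rule sum.cong[OF refl])
    fix t assume t: "t \<in> ?P"
    have "(\<Sum>q<size M. f (t ! q)) = sum_list (map f t)"
      using len[OF t] by (simp add: sum_list_sum_nth atLeast0LessThan)
    also have "\<dots> = (\<Sum>x\<in>#mset t. f x)" by (simp add: sum_mset_sum_list[symmetric])
    finally show "(\<Sum>q<size M. f (t ! q)) = (\<Sum>x\<in>#M. f x)" using t by (simp add: permutations_of_multiset_def)
  qed
  also have "\<dots> = of_nat (card ?P) * (\<Sum>x\<in>#M. f x)" by simp
  finally show ?thesis .
qed

lemma finite_tup:
  fixes S :: "nat \<Rightarrow> 'a::linordered_ab_group_add set"
  assumes "\<And>i. i < n \<Longrightarrow> wo (S i)"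
  shows "finite (tup S n x)"
proof -
  have "supp (coef ((\<lambda>_. 0) i :: ('a, real) mns)) \<subseteq> S i" for i by (simp add: supp_def)
  then show ?thesis using prod_coef(1)[of n S "\<lambda>_. 0 :: ('a, real) mns" x] assms by blast
qed

lemma sum_mset_mset_map: "(\<Sum>x\<in>#mset t. f x) = sum_list (map f t)"
  by (induction t) auto

context dsd
begin

lemma xd_sum: "xd (\<Sum>i\<in>I. a i) = (\<lambda>j. \<Sum>i\<in>I. xd (a i) j)"
  by (induction I rule: infinite_finite_induct) (simp_all add: xd_zero xd_add)

lemma comb_main:
  fixes A :: "nat \<Rightarrow> 'a set" and w :: "nat \<Rightarrow> 'a list \<Rightarrow> 'k::field" and k :: "nat \<Rightarrow> nat \<Rightarrow> int"
    and r :: "nat \<Rightarrow> 'a list \<Rightarrow> nat \<Rightarrow> int"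
  assumes pos: "\<And>i. i < n \<Longrightarrow> A i \<subseteq> {a. 0 < a}" and woA: "\<And>i. i < n \<Longrightarrow> wo (A i)"
    and wm: "\<And>i t t'. i < n \<Longrightarrow> mset t = mset t' \<Longrightarrow> w i t = w i t'"
    and w0: "\<And>i. w i [] = 1"
    and gG: "g \<in> G"
    and r_def: "\<And>i t j. r i t j = (if t = [] then k i j else xd (hd t) j)"
  shows "(\<Sum>p\<in>{p. p permutes {..<n}}. of_int (sign p) *
           (\<Sum>b\<in>tup (\<lambda>i. lsums (A i)) n g. \<Prod>i<n. \<Sum>t\<in>lsol (A i) (b i). w i t * of_int (r i t (p i))))
         = (if g = 0 then of_int (ldet n k) else 0)"
proof -
  define S where "S i = lsums (A i)" for i
  define T where "T b = PiE {..<n} (\<lambda>i. lsol (A i) (b i))" for b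
  define C where "C = {\<tau> \<in> PiE {..<n} (\<lambda>i. lists (A i)). (\<Sum>i<n. sum_list (\<tau> i)) = g}"
  have woS: "i < n \<Longrightarrow> wo (S i)" for i unfolding S_def using neumann_wo pos woA by blast
  have finlsol: "i < n \<Longrightarrow> finite (lsol (A i) b)" for i b using finite_lsol pos woA by blast
  have fintup: "finite (tup S n g)" using finite_tup woS by blast
  have finT: "finite (T b)" for b unfolding T_def using finlsol by (intro finite_PiE) auto
  have s1: "(\<Prod>i<n. \<Sum>t\<in>lsol (A i) (b i). X i t) = (\<Sum>\<tau>\<in>T b. \<Prod>i<n. X i (\<tau> i))" for b and X :: "nat \<Rightarrow> 'a list \<Rightarrow> 'k"
    unfolding T_def by (rule prod_sum_PiE) (use finlsol in auto)
  define jj where "jj = (\<lambda>(b::nat \<Rightarrow> 'a, \<tau>::nat \<Rightarrow> 'a list). \<tau>)"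
  define ii where "ii = (\<lambda>\<tau>::nat \<Rightarrow> 'a list. (restrict (\<lambda>i. sum_list (\<tau> i)) {..<n}, \<tau>))"
  have bij1: "bT \<in> Sigma (tup S n g) T \<Longrightarrow> ii (jj bT) = bT \<and> jj bT \<in> C" for bT
  proof -
    assume bT: "bT \<in> Sigma (tup S n g) T"
    obtain b \<tau> where e: "bT = (b, \<tau>)" by (cases bT)
    have b: "b \<in> PiE {..<n} S" "(\<Sum>i<n. b i) = g" "\<tau> \<in> PiE {..<n} (\<lambda>i. lsol (A i) (b i))"
      using bT e by (auto simp: tup_def T_def)
    have "restrict (\<lambda>i. sum_list (\<tau> i)) {..<n} = b"
      using b(1,3) by (auto simp: lsol_def PiE_def extensional_def fun_eq_iff Pi_def)
    moreover have "\<tau> \<in> PiE {..<n} (\<lambda>i. lists (A i))" using b(3) by (auto simp: lsol_def PiE_def Pi_def)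
    moreover have "(\<Sum>i<n. sum_list (\<tau> i)) = g"
    proof -
      have "(\<Sum>i<n. sum_list (\<tau> i)) = (\<Sum>i<n. b i)" using b(3) by (intro sum.cong) (auto simp: lsol_def PiE_def Pi_def)
      then show ?thesis using b(2) by simp
    qed
    ultimately show ?thesis using e by (simp add: ii_def jj_def C_def)
  qed
  have bij2: "\<tau> \<in> C \<Longrightarrow> jj (ii \<tau>) = \<tau> \<and> ii \<tau> \<in> Sigma (tup S n g) T" for \<tau>
  proof -
    assume t: "\<tau> \<in> C"
    then have t1: "\<tau> \<in> PiE {..<n} (\<lambda>i. lists (A i))" "(\<Sum>i<n. sum_list (\<tau> i)) = g" by (auto simp: C_def)
    have "restrict (\<lambda>i. sum_list (\<tau> i)) {..<n} \<in> PiE {..<n} S"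
      using t1(1) by (auto simp: S_def lsums_def PiE_def Pi_def)
    moreover have "(\<Sum>i<n. restrict (\<lambda>i. sum_list (\<tau> i)) {..<n} i) = g" using t1(2) by simp
    moreover have "\<tau> \<in> T (restrict (\<lambda>i. sum_list (\<tau> i)) {..<n})"
      using t1(1) by (auto simp: T_def lsol_def PiE_def Pi_def)
    ultimately show ?thesis by (simp add: ii_def jj_def tup_def)
  qed
  have s2: "(\<Sum>b\<in>tup S n g. \<Sum>\<tau>\<in>T b. \<Phi> \<tau>) = (\<Sum>\<tau>\<in>C. \<Phi> \<tau>)" for \<Phi> :: "(nat \<Rightarrow> 'a list) \<Rightarrow> 'k"
  proof -
    have "(\<Sum>b\<in>tup S n g. \<Sum>\<tau>\<in>T b. \<Phi> \<tau>) = (\<Sum>bT\<in>Sigma (tup S n g) T. \<Phi> (jj bT))"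
      by (subst sum.Sigma) (use fintup finT in \<open>auto simp: jj_def split_def\<close>)
    also have "\<dots> = (\<Sum>\<tau>\<in>C. \<Phi> \<tau>)"
      by (rule sum.reindex_bij_witness[of _ ii jj]) (use bij1 bij2 in auto)
    finally show ?thesis .
  qed
  have finC: "finite C"
  proof -
    have "C \<subseteq> jj ` Sigma (tup S n g) T"
    proof
      fix \<tau> assume "\<tau> \<in> C"
      then show "\<tau> \<in> jj ` Sigma (tup S n g) T" using bij2[of \<tau>] by (metis image_eqI)
    qed
    moreover have "finite (Sigma (tup S n g) T)" using fintup finT by auto
    ultimately show ?thesis by (rule finite_subset[OF _ finite_imageI])
  qed
  define D where "D \<tau> = ldet n (\<lambda>i j. r i (\<tau> i) j)" for \<tau>
  define Wt where "Wt \<tau> = (\<Prod>i<n. w i (\<tau> i))" for \<tau>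
  have LHS: "(\<Sum>p\<in>{p. p permutes {..<n}}. of_int (sign p) *
           (\<Sum>b\<in>tup S n g. \<Prod>i<n. \<Sum>t\<in>lsol (A i) (b i). w i t * of_int (r i t (p i))))
        = (\<Sum>\<tau>\<in>C. Wt \<tau> * of_int (D \<tau>))"
  proof -
    have "(\<Sum>p\<in>{p. p permutes {..<n}}. of_int (sign p) *
           (\<Sum>b\<in>tup S n g. \<Prod>i<n. \<Sum>t\<in>lsol (A i) (b i). w i t * of_int (r i t (p i))))
        = (\<Sum>p\<in>{p. p permutes {..<n}}. of_int (sign p) * (\<Sum>\<tau>\<in>C. \<Prod>i<n. w i (\<tau> i) * of_int (r i (\<tau> i) (p i))))"
      by (simp only: s1 s2)
    also have "\<dots> = (\<Sum>\<tau>\<in>C. \<Sum>p\<in>{p. p permutes {..<n}}. of_int (sign p) * (\<Prod>i<n. w i (\<tau> i) * of_int (r i (\<tau> i) (p i))))"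
      by (simp add: sum_distrib_left sum.swap[of _ C])
    also have "\<dots> = (\<Sum>\<tau>\<in>C. Wt \<tau> * of_int (D \<tau>))"
    proof (rule sum.cong[OF refl])
      fix \<tau>
      have "(\<Sum>p\<in>{p. p permutes {..<n}}. of_int (sign p) * (\<Prod>i<n. w i (\<tau> i) * of_int (r i (\<tau> i) (p i))))
          = (\<Sum>p\<in>{p. p permutes {..<n}}. Wt \<tau> * of_int (of_int (sign p) * (\<Prod>i<n. r i (\<tau> i) (p i))))"
        by (simp add: Wt_def prod.distrib algebra_simps)
      also have "\<dots> = Wt \<tau> * of_int (D \<tau>)"
        by (simp add: D_def ldet_def sum_distrib_left)
      finally show "(\<Sum>p\<in>{p. p permutes {..<n}}. of_int (sign p) * (\<Prod>i<n. w i (\<tau> i) * of_int (r i (\<tau> i) (p i)))) = Wt \<tau> * of_int (D \<tau>)" .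
    qed
    finally show ?thesis .
  qed
  define \<mu> where "\<mu> \<tau> = (\<lambda>i. if i < n then mset (\<tau> i) else {#})" for \<tau> :: "nat \<Rightarrow> 'a list"
  have mu_at: "mset (\<tau> i) = M i" if "\<mu> \<tau> = M" "i < n" for \<tau> M i
    using fun_cong[OF that(1), of i] that(2) by (simp add: \<mu>_def)
  have mu_out: "M i = {#}" if "\<mu> \<tau> = M" "\<not> i < n" for \<tau> M i
    using fun_cong[OF that(1), of i] that(2) by (simp add: \<mu>_def)
  define R where "R M i j = (\<Sum>t\<in>permutations_of_multiset (M i). r i t j)" for M i j
  define rep where "rep M = (SOME \<tau>. \<tau> \<in> C \<and> \<mu> \<tau> = M)" for M
  have rep: "rep M \<in> C \<and> \<mu> (rep M) = M" if "M \<in> \<mu> ` C" for M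
  proof -
    have "\<exists>\<tau>. \<tau> \<in> C \<and> \<mu> \<tau> = M" using that by blast
    then show ?thesis unfolding rep_def by (rule someI_ex)
  qed
  have fiber: "{\<tau>\<in>C. \<mu> \<tau> = M} = PiE {..<n} (\<lambda>i. permutations_of_multiset (M i))" if M: "M \<in> \<mu> ` C" for M
  proof (intro equalityI subsetI)
    fix \<tau> assume "\<tau> \<in> {\<tau>\<in>C. \<mu> \<tau> = M}"
    then have t: "\<tau> \<in> PiE {..<n} (\<lambda>i. lists (A i))" "\<mu> \<tau> = M" by (auto simp: C_def)
    have "mset (\<tau> i) = M i" if "i < n" for i using mu_at[OF t(2) that] .
    then show "\<tau> \<in> PiE {..<n} (\<lambda>i. permutations_of_multiset (M i))"
      using t(1) by (auto simp: PiE_def Pi_def permutations_of_multiset_def)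
  next
    fix \<tau> assume t: "\<tau> \<in> PiE {..<n} (\<lambda>i. permutations_of_multiset (M i))"
    obtain \<tau>0 where t0: "\<tau>0 \<in> C" "\<mu> \<tau>0 = M" using M by blast
    have t01: "\<tau>0 \<in> PiE {..<n} (\<lambda>i. lists (A i))" "(\<Sum>i<n. sum_list (\<tau>0 i)) = g" using t0(1) by (auto simp: C_def)
    have ms: "mset (\<tau> i) = mset (\<tau>0 i)" if "i < n" for i
    proof -
      have "mset (\<tau> i) = M i" using t that by (auto simp: PiE_def Pi_def permutations_of_multiset_def)
      also have "\<dots> = mset (\<tau>0 i)" using mu_at[OF t0(2) that] by simp
      finally show ?thesis .
    qed
    have "set (\<tau> i) \<subseteq> A i" if "i < n" for i
    proof -
      have "set (\<tau> i) = set (\<tau>0 i)" using ms[OF that] by (metis set_mset_mset)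
      then show ?thesis using t01(1) that by (auto simp: PiE_def Pi_def)
    qed
    then have "\<tau> \<in> PiE {..<n} (\<lambda>i. lists (A i))" using t by (auto simp: PiE_def Pi_def)
    moreover have "(\<Sum>i<n. sum_list (\<tau> i)) = g"
    proof -
      have "(\<Sum>i<n. sum_list (\<tau> i)) = (\<Sum>i<n. sum_list (\<tau>0 i))"
        by (rule sum.cong[OF refl]) (simp add: sum_mset_sum_list[symmetric] ms)
      then show ?thesis using t01(2) by simp
    qed
    moreover have "\<mu> \<tau> = M"
    proof
      fix i show "\<mu> \<tau> i = M i"
        using ms t0(2) mu_at[OF t0(2)] mu_out[OF t0(2)] by (cases "i < n") (auto simp: \<mu>_def)
    qed
    ultimately show "\<tau> \<in> {\<tau>\<in>C. \<mu> \<tau> = M}" by (simp add: C_def)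
  qed
  have finP: "finite (PiE {..<n} (\<lambda>i. permutations_of_multiset (M i)))" for M
    by (intro finite_PiE) auto
  have inner: "(\<Sum>\<tau>\<in>PiE {..<n} (\<lambda>i. permutations_of_multiset (M i)). D \<tau>) = ldet n (R M)" for M
  proof -
    have "(\<Sum>\<tau>\<in>PiE {..<n} (\<lambda>i. permutations_of_multiset (M i)). D \<tau>)
        = (\<Sum>p\<in>{p. p permutes {..<n}}. of_int (sign p) * (\<Sum>\<tau>\<in>PiE {..<n} (\<lambda>i. permutations_of_multiset (M i)). \<Prod>i<n. r i (\<tau> i) (p i)))"
      unfolding D_def ldet_def by (simp add: sum_distrib_left sum.swap[of _ "{p. p permutes {..<n}}"])
    also have "\<dots> = ldet n (R M)"
      unfolding ldet_def R_def by (subst prod_sum_PiE) auto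
    finally show ?thesis .
  qed
  have Wtc: "Wt \<tau> = Wt (rep M)" if M: "M \<in> \<mu> ` C" and t: "\<tau> \<in> {\<tau>\<in>C. \<mu> \<tau> = M}" for M \<tau>
  proof -
    have "mset (\<tau> i) = mset (rep M i)" if "i < n" for i
      using mu_at[of \<tau> M i] mu_at[of "rep M" M i] t rep[OF M] that by simp
    then have ms: "\<And>i. i < n \<Longrightarrow> mset (\<tau> i) = mset (rep M i)" by blast
    show ?thesis unfolding Wt_def
    proof (rule prod.cong[OF refl])
      fix i assume i: "i \<in> {..<n}"
      show "w i (\<tau> i) = w i (rep M i)" by (rule wm) (use i ms in auto)
    qed
  qed
  have grp: "(\<Sum>\<tau>\<in>C. Wt \<tau> * of_int (D \<tau>)) = (\<Sum>M\<in>\<mu> ` C. Wt (rep M) * of_int (ldet n (R M)))"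
  proof -
    have "(\<Sum>\<tau>\<in>C. Wt \<tau> * of_int (D \<tau>)) = (\<Sum>M\<in>\<mu> ` C. \<Sum>\<tau>\<in>{\<tau>\<in>C. \<mu> \<tau> = M}. Wt \<tau> * of_int (D \<tau>))"
      by (rule sum.image_gen[OF finC])
    also have "\<dots> = (\<Sum>M\<in>\<mu> ` C. Wt (rep M) * of_int (ldet n (R M)))"
    proof (rule sum.cong[OF refl])
      fix M assume M: "M \<in> \<mu> ` C"
      have "(\<Sum>\<tau>\<in>{\<tau>\<in>C. \<mu> \<tau> = M}. Wt \<tau> * of_int (D \<tau>)) = (\<Sum>\<tau>\<in>{\<tau>\<in>C. \<mu> \<tau> = M}. Wt (rep M) * of_int (D \<tau>))"
        by (rule sum.cong[OF refl]) (simp add: Wtc[OF M])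
      also have "\<dots> = Wt (rep M) * of_int (\<Sum>\<tau>\<in>{\<tau>\<in>C. \<mu> \<tau> = M}. D \<tau>)"
        by (simp add: sum_distrib_left)
      also have "\<dots> = Wt (rep M) * of_int (ldet n (R M))" by (simp only: fiber[OF M] inner)
      finally show "(\<Sum>\<tau>\<in>{\<tau>\<in>C. \<mu> \<tau> = M}. Wt \<tau> * of_int (D \<tau>)) = Wt (rep M) * of_int (ldet n (R M))" .
    qed
    finally show ?thesis .
  qed
  define M0 where "M0 = (\<lambda>i::nat. ({#} :: 'a multiset))"
  have zero: "ldet n (R M) = 0" if M: "M \<in> \<mu> ` C" and MM0: "M \<noteq> M0" for M
  proof -
    obtain \<tau>0 where t0: "\<tau>0 \<in> C" "\<mu> \<tau>0 = M" using M by blast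
    have t01: "\<tau>0 \<in> PiE {..<n} (\<lambda>i. lists (A i))" "(\<Sum>i<n. sum_list (\<tau>0 i)) = g" using t0(1) by (auto simp: C_def)
    have Mi: "M i = mset (\<tau>0 i)" if "i < n" for i using mu_at[OF t0(2) that] by simp
    have Mo: "M i = {#}" if "\<not> i < n" for i using mu_out[OF t0(2) that] .
    define sv where "sv i j = (\<Sum>x\<in>#M i. xd x j)" for i j
    have key: "of_nat (size (M i)) * R M i j = of_nat (card (permutations_of_multiset (M i))) * sv i j"
      if ne: "M i \<noteq> {#}" for i j
    proof -
      have "R M i j = (\<Sum>t\<in>permutations_of_multiset (M i). xd (hd t) j)"
      proof (unfold R_def, rule sum.cong[OF refl])
        fix t assume "t \<in> permutations_of_multiset (M i)"
        then have "t \<noteq> []" using ne by (auto simp: permutations_of_multiset_def)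
        then show "r i t j = xd (hd t) j" by (simp add: r_def)
      qed
      then show ?thesis unfolding sv_def using perms_hd_sum[OF ne, of "\<lambda>x. xd x j"] by simp
    qed
    define c where "c i = (if M i = {#} then 1 else int (size (M i)))" for i
    define d where "d i = (if M i = {#} then 1 else int (card (permutations_of_multiset (M i))))" for i
    define R' where "R' i j = (if M i = {#} then R M i j else sv i j)" for i j
    have "ldet n (\<lambda>i j. c i * R M i j) = ldet n (\<lambda>i j. d i * R' i j)"
      by (rule ldet_cong) (auto simp: c_def d_def R'_def key)
    then have eq: "(\<Prod>i<n. c i) * ldet n (R M) = (\<Prod>i<n. d i) * ldet n R'"
      by (simp add: ldet_scale_rows)
    have "ldet n R' = 0"
    proof (rule ldet_dep[of "{i. i < n \<and> M i \<noteq> {#}}"])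
      show "{i. i < n \<and> M i \<noteq> {#}} \<subseteq> {..<n}" by auto
      show "{i. i < n \<and> M i \<noteq> {#}} \<noteq> {}"
      proof
        assume "{i. i < n \<and> M i \<noteq> {#}} = {}"
        then have "M = M0" using Mo by (auto simp: M0_def fun_eq_iff)
        then show False using MM0 by simp
      qed
      fix j
      have "(\<Sum>i\<in>{i. i < n \<and> M i \<noteq> {#}}. R' i j) = (\<Sum>i\<in>{i. i < n \<and> M i \<noteq> {#}}. sv i j)"
        by (rule sum.cong) (auto simp: R'_def)
      also have "\<dots> = (\<Sum>i<n. sv i j)"
        by (rule sum.mono_neutral_left) (auto simp: sv_def)
      also have "\<dots> = (\<Sum>i<n. xd (sum_list (\<tau>0 i)) j)"
        by (rule sum.cong[OF refl]) (simp add: sv_def Mi xd_sum_list sum_mset_mset_map)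
      also have "\<dots> = xd (\<Sum>i<n. sum_list (\<tau>0 i)) j" by (simp add: xd_sum)
      also have "\<dots> = 0" using t01(2) xd_G[OF gG] by simp
      finally show "(\<Sum>i\<in>{i. i < n \<and> M i \<noteq> {#}}. R' i j) = 0" .
    qed
    moreover have "(\<Prod>i<n. c i) \<noteq> 0" by (auto simp: c_def)
    ultimately show ?thesis using eq by simp
  qed
  define te :: "nat \<Rightarrow> 'a list" where "te = (\<lambda>i::nat. if i < n then [] else undefined)"
  have M0C: "M0 \<in> \<mu> ` C \<longleftrightarrow> g = 0"
  proof
    assume "M0 \<in> \<mu> ` C"
    then obtain \<tau> where t: "\<tau> \<in> C" "\<mu> \<tau> = M0" by blast
    have "\<tau> i = []" if "i < n" for i using mu_at[OF t(2) that] by (simp add: M0_def)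
    then have "(\<Sum>i<n. sum_list (\<tau> i)) = 0" by simp
    then show "g = 0" using t(1) by (simp add: C_def)
  next
    assume g0: "g = 0"
    have "te \<in> C" using g0 by (auto simp: C_def te_def PiE_def extensional_def)
    moreover have "\<mu> te = M0" by (auto simp: \<mu>_def te_def M0_def)
    ultimately show "M0 \<in> \<mu> ` C" by (metis image_eqI)
  qed
  have valM0: "Wt (rep M0) * of_int (ldet n (R M0)) = of_int (ldet n k)" if "M0 \<in> \<mu> ` C"
  proof -
    have "rep M0 i = []" if "i < n" for i using mu_at[of "rep M0" M0 i] rep[OF \<open>M0 \<in> \<mu> ` C\<close>] that by (simp add: M0_def)
    then have "Wt (rep M0) = 1" by (simp add: Wt_def w0)
    moreover have "R M0 = (\<lambda>i j. k i j)" by (simp add: R_def M0_def r_def fun_eq_iff)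
    ultimately show ?thesis by simp
  qed
  have "(\<Sum>M\<in>\<mu> ` C. Wt (rep M) * of_int (ldet n (R M))) = (if g = 0 then of_int (ldet n k) else 0)"
  proof (cases "g = 0")
    case True
    then have M0in: "M0 \<in> \<mu> ` C" using M0C by simp
    have "(\<Sum>M\<in>\<mu> ` C. Wt (rep M) * of_int (ldet n (R M))) = Wt (rep M0) * of_int (ldet n (R M0)) +
          (\<Sum>M\<in>\<mu> ` C - {M0}. Wt (rep M) * of_int (ldet n (R M)))"
      using M0in finC by (simp add: sum.remove)
    also have "(\<Sum>M\<in>\<mu> ` C - {M0}. Wt (rep M) * of_int (ldet n (R M))) = 0"
      by (rule sum.neutral) (use zero in auto)
    finally show ?thesis using True valM0[OF M0in] by simp
  next
    case False
    then have "M0 \<notin> \<mu> ` C" using M0C by simp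
    have "\<forall>M\<in>\<mu> ` C. Wt (rep M) * of_int (ldet n (R M)) = 0"
    proof
      fix M assume M: "M \<in> \<mu> ` C"
      then have "M \<noteq> M0" using \<open>M0 \<notin> \<mu> ` C\<close> by blast
      then show "Wt (rep M) * of_int (ldet n (R M)) = 0" using zero[OF M] by simp
    qed
    then have "(\<Sum>M\<in>\<mu> ` C. Wt (rep M) * of_int (ldet n (R M))) = 0"
      by (rule sum.neutral)
    then show ?thesis using False by simp
  qed
  then show ?thesis using LHS grp unfolding S_def by simp
qed

end

definition gw :: "('a \<Rightarrow> 'k::field) \<Rightarrow> 'a list \<Rightarrow> 'k" where
  "gw h t = (if t = [] then 1 else - prod_list (map (\<lambda>x. - h x) t))"

lemma gw_mset: fixes h :: "'a \<Rightarrow> 'k::field" shows "mset t = mset t' \<Longrightarrow> gw h t = gw h t'"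
proof -
  assume m: "mset t = mset t'"
  have "prod_list (map g t) = prod_list (map g t')" for g :: "'a \<Rightarrow> 'k"
    by (metis m mset_map prod_mset_prod_list)
  moreover have "t = [] \<longleftrightarrow> t' = []" using m by (metis mset_zero_iff)
  ultimately show ?thesis unfolding gw_def by simp
qed

lemma coef_of_int: "coef (of_int k :: ('a::linordered_ab_group_add, 'k::field) mns) x = (if x = 0 then of_int k else 0)"
proof (cases "x = 0")
  case True then show ?thesis using coef_of_int_mult[of k 1 0] by (simp add: coef_one mn_one_def)
next
  case False then show ?thesis using coef_of_int_mult[of k 1 x] by (simp add: coef_one mn_one_def)
qed

context dsd
begin

lemma L_coef:
  fixes f :: "('a, 'k::field) mns"
  assumes fdec: "f = mon c m * (1 + Abs_mns h)" and c0: "c \<noteq> 0" and mnh: "is_MN h" and posh: "supp h \<subseteq> {a. 0 < a}"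
  shows "coef (eul j f * inverse f) b =
         (\<Sum>t\<in>lsol (supp h) b. gw h t * of_int (if t = [] then xd m j else xd (hd t) j))"
proof -
  let ?A = "supp h"
  define H where "H = Abs_mns h"
  define W where "W = Abs_mns (Wfun h)"
  have cH: "coef H = h" unfolding H_def using mnh by (simp add: Abs_mns_inverse)
  have cW: "coef W = Wfun h" unfolding W_def using neumann_inverse[OF mnh posh] by (simp add: Abs_mns_inverse)
  have HW: "(1 + H) * W = 1" unfolding H_def W_def by (rule inverse_one_plus[OF mnh posh])
  have invH: "inverse (1 + H) = W" using HW by (metis inverse_unique)
  have mon0: "mon c m \<noteq> 0"
  proof
    assume "mon c m = 0"
    then have "coef (mon c m) m = 0" by simp
    then show False using c0 by (simp add: mon.rep_eq)
  qed
  have "eul j f * inverse f = mon c m * (of_int (xd m j) * (1 + H) + eul j H) * (inverse (mon c m) * W)"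
    unfolding fdec H_def[symmetric] eul_mon_mult eul_add eul_one invH[symmetric]
    by (simp add: inverse_mult_distrib)
  also have "\<dots> = (mon c m * inverse (mon c m)) * ((of_int (xd m j) * (1 + H) + eul j H) * W)"
    by (simp only: ac_simps)
  also have "\<dots> = (of_int (xd m j) * (1 + H) + eul j H) * W"
    using mon0 by simp
  also have "\<dots> = of_int (xd m j) * ((1 + H) * W) + eul j H * W"
    by (simp only: distrib_right mult.assoc)
  also have "\<dots> = of_int (xd m j) + eul j H * W"
    by (simp only: HW mult_1_right)
  finally have Leq: "eul j f * inverse f = of_int (xd m j) + eul j H * W" .
  have woA: "wo ?A" using mnh by (simp add: is_MN_supp)
  have woS: "wo (lsums ?A)" using neumann_wo[OF posh woA] .
  define X where "X = {a\<in>?A. b - a \<in> lsums ?A}"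
  have finX: "finite X" unfolding X_def using finite_decomp[OF woA woS] .
  have "coef (eul j H * W) b = mn_mult (coef (eul j H)) (Wfun h) b" by (simp add: coef_mult cW)
  also have "\<dots> = (\<Sum>a\<in>X. coef (eul j H) a * Wfun h (b - a))"
  proof (rule mn_mult_eq[OF coef_MN neumann_inverse(1)[OF mnh posh] finX])
    fix a assume a: "coef (eul j H) a \<noteq> 0" "Wfun h (b - a) \<noteq> 0"
    then have "h a \<noteq> 0" by (auto simp: eul.rep_eq cH)
    then show "a \<in> X" using Wfun_supp[OF a(2)] by (simp add: X_def supp_def)
  qed
  also have "\<dots> = (\<Sum>a\<in>X. \<Sum>t\<in>lsol ?A (b - a). gw h (a # t) * of_int (xd (hd (a # t)) j))"
  proof (rule sum.cong[OF refl])
    fix a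
    show "coef (eul j H) a * Wfun h (b - a) = (\<Sum>t\<in>lsol ?A (b - a). gw h (a # t) * of_int (xd (hd (a # t)) j))"
      by (simp add: eul.rep_eq cH Wfun_def gw_def sum_distrib_left algebra_simps)
  qed
  finally have E: "coef (eul j H * W) b = (\<Sum>a\<in>X. \<Sum>t\<in>lsol ?A (b - a). gw h (a # t) * of_int (xd (hd (a # t)) j))" .
  have "(\<Sum>t\<in>lsol ?A b. gw h t * of_int (if t = [] then xd m j else xd (hd t) j))
      = (if b = 0 then of_int (xd m j) else 0) + (\<Sum>a\<in>X. \<Sum>t\<in>lsol ?A (b - a). gw h (a # t) * of_int (xd (hd (a # t)) j))"
    unfolding X_def by (subst sum_lsol_decomp[OF posh woA]) (simp add: gw_def)
  then show ?thesis using Leq E by (simp add: coef_of_int)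
qed

lemma x_init_exp_eq:
  fixes f :: "'a \<Rightarrow> 'k::zero"
  assumes mn: "is_MN f" and nz: "f \<noteq> (\<lambda>_. 0)"
  shows "x_init_exp G n eps f = xd (mn_ord f)"
proof -
  define m where "m = mn_ord f"
  have m: "m \<in> supp f" "\<forall>s\<in>supp f. m \<le> s" using mn_ord_least[OF mn nz] m_def by auto
  have ordc: "mn_ord (xcomp G n eps f k) \<in> supp f \<and> xd (mn_ord (xcomp G n eps f k)) = k"
    if "xcomp G n eps f k \<noteq> (\<lambda>_. 0)" for k
  proof -
    have "supp (xcomp G n eps f k) \<subseteq> supp f" by (auto simp: supp_def xcomp_def)
    then have "is_MN (xcomp G n eps f k)" using mn wo_subset unfolding is_MN_supp by blast
    from mn_ord_least(1)[OF this that] show ?thesis by (auto simp: supp_def xcomp_def split: if_splits)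
  qed
  have c0: "xcomp G n eps f (xd m) \<noteq> (\<lambda>_. 0)"
  proof
    assume "xcomp G n eps f (xd m) = (\<lambda>_. 0)"
    then have "xcomp G n eps f (xd m) m = 0" by simp
    then show False using m(1) by (simp add: xcomp_def supp_def)
  qed
  have ordm: "mn_ord (xcomp G n eps f (xd m)) = m"
  proof -
    have "supp (xcomp G n eps f (xd m)) \<subseteq> supp f" by (auto simp: supp_def xcomp_def)
    then have mnx: "is_MN (xcomp G n eps f (xd m))" using mn wo_subset unfolding is_MN_supp by blast
    have "m \<in> supp (xcomp G n eps f (xd m))" using m(1) by (simp add: supp_def xcomp_def)
    then have "mn_ord (xcomp G n eps f (xd m)) \<le> m" using mn_ord_least(2)[OF mnx c0] by blast
    moreover have "m \<le> mn_ord (xcomp G n eps f (xd m))" using m(2) ordc[OF c0] by blast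
    ultimately show ?thesis by simp
  qed
  show ?thesis
    unfolding x_init_exp_def m_def[symmetric]
  proof (rule the_equality)
    show "xd m \<in> exps n \<and> xcomp G n eps f (xd m) \<noteq> (\<lambda>_. 0) \<and>
          (\<forall>k'\<in>exps n. xcomp G n eps f k' \<noteq> (\<lambda>_. 0) \<longrightarrow>
             mn_ord (xcomp G n eps f (xd m)) \<le> mn_ord (xcomp G n eps f k'))"
      using xd_exps c0 ordm ordc m(2) by auto
  next
    fix k assume k: "k \<in> exps n \<and> xcomp G n eps f k \<noteq> (\<lambda>_. 0) \<and>
          (\<forall>k'\<in>exps n. xcomp G n eps f k' \<noteq> (\<lambda>_. 0) \<longrightarrow>
             mn_ord (xcomp G n eps f k) \<le> mn_ord (xcomp G n eps f k'))"
    then have "mn_ord (xcomp G n eps f k) \<le> m" using xd_exps c0 ordm by auto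
    moreover have "m \<le> mn_ord (xcomp G n eps f k)" using ordc k m(2) by blast
    ultimately have "mn_ord (xcomp G n eps f k) = m" by simp
    then show "k = xd m" using ordc k by metis
  qed
qed

end

lemma mn_prod_coef: "mn_prod (map (\<lambda>i. coef (P i)) xs) = coef (prod_list (map P xs))"
  by (induction xs) (simp_all add: mn_prod_def coef_one coef_mult)

lemma prod_list_upt: "prod_list (map P [0..<n]) = (\<Prod>i<n. P i)"
  by (induction n) (simp_all add: mult.commute)

lemma prod_mon: "(\<Prod>i<(n::nat). mon 1 (e i)) = mon 1 (\<Sum>i<n. e i)"
  by (induction n) (simp_all add: mon_one mon_mult add.commute)

context dsd
begin

lemma main_dsd:
  fixes F :: "nat \<Rightarrow> 'a \<Rightarrow> 'k::field"
  assumes Fok: "\<forall>i<n. is_MN (F i) \<and> F i \<noteq> (\<lambda>_. 0)"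
  shows "Res G n eps (mn_mult (mn_prod (map (\<lambda>i. mn_inv (F i)) [0..<n])) (jac G n eps F))
           = (\<lambda>\<gamma>. if \<gamma> = 0 then of_int (jdet G n eps F) else 0)
         \<and> CT G (LJ G n eps F) = (\<lambda>\<gamma>. if \<gamma> = 0 then of_int (jdet G n eps F) else 0)"
proof -
  define Fm :: "nat \<Rightarrow> ('a, 'k) mns" where "Fm i = Abs_mns (F i)" for i
  have cF: "coef (Fm i) = F i" if "i < n" for i
    using Fok that unfolding Fm_def by (simp add: Abs_mns_inverse)
  have Fm0: "Fm i \<noteq> 0" if "i < n" for i
  proof
    assume "Fm i = 0"
    then have "coef (Fm i) = (\<lambda>_. 0)" by simp
    then show False using cF[OF that] Fok that by simp
  qed
  have "\<forall>i. \<exists>ch. i < n \<longrightarrow> (fst ch \<noteq> 0 \<and> is_MN (snd ch) \<and> supp (snd ch) \<subseteq> {a. 0 < a} \<and>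
          Fm i = mon (fst ch) (mn_ord (F i)) * (1 + Abs_mns (snd ch)))"
  proof
    fix i
    show "\<exists>ch. i < n \<longrightarrow> (fst ch \<noteq> 0 \<and> is_MN (snd ch) \<and> supp (snd ch) \<subseteq> {a. 0 < a} \<and>
          Fm i = mon (fst ch) (mn_ord (F i)) * (1 + Abs_mns (snd ch)))"
    proof (cases "i < n")
      case True
      obtain c h where "c \<noteq> 0 \<and> is_MN h \<and> supp h \<subseteq> {a. 0 < a} \<and> Fm i = mon c (mn_ord (coef (Fm i))) * (1 + Abs_mns h)"
        using mns_decomp[OF Fm0[OF True]] by blast
      then show ?thesis using cF[OF True] by (intro exI[of _ "(c, h)"]) simp
    qed simp
  qed
  from choice[OF this] obtain ch where ch: "\<And>i. i < n \<Longrightarrow> fst (ch i) \<noteq> 0 \<and> is_MN (snd (ch i)) \<and>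
      supp (snd (ch i)) \<subseteq> {a. 0 < a} \<and> Fm i = mon (fst (ch i)) (mn_ord (F i)) * (1 + Abs_mns (snd (ch i)))"
    by blast
  define hh where "hh i = snd (ch i)" for i
  define k where "k i j = xd (mn_ord (F i)) j" for i j
  define A where "A i = supp (hh i)" for i
  define w where "w i t = gw (hh i) t" for i t
  define r where "r i t j = (if t = [] then k i j else xd (hd t) j)" for i t j
  define L where "L i j = eul j (Fm i) * inverse (Fm i)" for i j
  have posA: "A i \<subseteq> {a. 0 < a}" and mnh: "is_MN (hh i)" if "i < n" for i
    using ch[OF that] by (simp_all add: A_def hh_def)
  have woA: "wo (A i)" if "i < n" for i using mnh[OF that] by (simp add: A_def is_MN_supp)
  have wm: "w i t = w i t'" if "i < n" "mset t = mset t'" for i t t'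
    unfolding w_def by (rule gw_mset[OF that(2)])
  have Lc: "coef (L i j) b = (\<Sum>t\<in>lsol (A i) b. w i t * of_int (r i t j))" if "i < n" for i j b
    unfolding L_def A_def w_def r_def k_def
    by (rule L_coef[where c = "fst (ch i)"]) (use ch[OF that] in \<open>simp_all add: hh_def\<close>)
  have Lsupp: "supp (coef (L i j)) \<subseteq> lsums (A i)" if "i < n" for i j
  proof
    fix b assume "b \<in> supp (coef (L i j))"
    then have "lsol (A i) b \<noteq> {}" using Lc[OF that] by (auto simp: supp_def)
    then show "b \<in> lsums (A i)" unfolding lsol_def lsums_def by blast
  qed
  define Xm where "Xm = (\<Prod>i<n. mon (1::'k) (eps i))"
  define Invs where "Invs = (\<Prod>i<n. inverse (Fm i))"
  define Jac where "Jac = (\<Sum>p\<in>{p. p permutes {..<n}}. of_int (sign p) * (\<Prod>i<n. dv (p i) (Fm i)))"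
  have jacEq: "jac G n eps F = coef Jac"
  proof
    fix x
    have "mn_prod (map (\<lambda>i. mn_deriv G n eps (p i) (F i)) [0..<n]) = coef (\<Prod>i<n. dv (p i) (Fm i))" for p
    proof -
      have "map (\<lambda>i. mn_deriv G n eps (p i) (F i)) [0..<n] = map (\<lambda>i. coef (dv (p i) (Fm i))) [0..<n]"
        by (rule map_cong[OF refl]) (simp add: dv.rep_eq cF)
      then show ?thesis by (simp only: mn_prod_coef prod_list_upt)
    qed
    then show "jac G n eps F x = coef Jac x"
      unfolding jac_def Jac_def by (simp add: coef_sum coef_of_int_mult)
  qed
  have invEq: "mn_prod (map (\<lambda>i. mn_inv (F i)) [0..<n]) = coef Invs"
  proof -
    have "map (\<lambda>i. mn_inv (F i)) [0..<n] = map (\<lambda>i. coef (inverse (Fm i))) [0..<n]"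
      by (rule map_cong[OF refl]) (simp add: mn_inv_coef[OF Fm0, symmetric] cF)
    then show ?thesis unfolding Invs_def by (simp only: mn_prod_coef prod_list_upt)
  qed
  have xEq: "mn_prod (map (mn_x eps) [0..<n]) = (coef Xm :: 'a \<Rightarrow> 'k)"
  proof -
    have "map (mn_x eps) [0..<n] = map (\<lambda>i. coef (mon (1::'k) (eps i))) [0..<n]"
      by (rule map_cong[OF refl]) (simp add: mn_x_def mon.rep_eq fun_eq_iff)
    then show ?thesis unfolding Xm_def by (simp only: mn_prod_coef prod_list_upt)
  qed
  have key: "Xm * (Invs * Jac) = (\<Sum>p\<in>{p. p permutes {..<n}}. of_int (sign p) * (\<Prod>i<n. L i (p i)))"
  proof -
    have "Xm * (Invs * Jac) = (\<Sum>p\<in>{p. p permutes {..<n}}. of_int (sign p) * (Xm * Invs * (\<Prod>i<n. dv (p i) (Fm i))))"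
      unfolding Jac_def by (simp add: sum_distrib_left ac_simps)
    also have "\<dots> = (\<Sum>p\<in>{p. p permutes {..<n}}. of_int (sign p) * (\<Prod>i<n. L i (p i)))"
    proof (rule sum.cong[OF refl])
      fix p assume "p \<in> {p. p permutes {..<n}}"
      then have p: "p permutes {..<n}" by simp
      have "Xm = (\<Prod>i<n. mon 1 (eps (p i)))"
        unfolding Xm_def using prod.permute[OF p, of "\<lambda>i. mon 1 (eps i)"] by (simp add: comp_def)
      then have "Xm * Invs * (\<Prod>i<n. dv (p i) (Fm i)) = (\<Prod>i<n. mon 1 (eps (p i)) * dv (p i) (Fm i) * inverse (Fm i))"
        unfolding Invs_def by (simp add: prod.distrib ac_simps)
      also have "\<dots> = (\<Prod>i<n. L i (p i))" by (simp add: x_dv L_def)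
      finally show "of_int (sign p) * (Xm * Invs * (\<Prod>i<n. dv (p i) (Fm i))) = of_int (sign p) * (\<Prod>i<n. L i (p i))"
        by simp
    qed
    finally show ?thesis .
  qed
  have coefkey: "coef (Xm * (Invs * Jac)) g = (if g = 0 then of_int (ldet n k) else 0)" if gG: "g \<in> G" for g
  proof -
    have "coef (Xm * (Invs * Jac)) g = (\<Sum>p\<in>{p. p permutes {..<n}}. of_int (sign p) * coef (\<Prod>i<n. L i (p i)) g)"
      unfolding key by (simp add: coef_sum coef_of_int_mult)
    also have "\<dots> = (\<Sum>p\<in>{p. p permutes {..<n}}. of_int (sign p) *
           (\<Sum>b\<in>tup (\<lambda>i. lsums (A i)) n g. \<Prod>i<n. \<Sum>t\<in>lsol (A i) (b i). w i t * of_int (r i t (p i))))"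
    proof (rule sum.cong[OF refl])
      fix p
      have "coef (\<Prod>i<n. L i (p i)) g = (\<Sum>b\<in>tup (\<lambda>i. lsums (A i)) n g. \<Prod>i<n. coef (L i (p i)) (b i))"
        by (rule prod_coef(2)) (use neumann_wo posA woA Lsupp in auto)
      also have "\<dots> = (\<Sum>b\<in>tup (\<lambda>i. lsums (A i)) n g. \<Prod>i<n. \<Sum>t\<in>lsol (A i) (b i). w i t * of_int (r i t (p i)))"
        by (rule sum.cong[OF refl], rule prod.cong[OF refl]) (simp add: Lc)
      finally show "of_int (sign p) * coef (\<Prod>i<n. L i (p i)) g = of_int (sign p) *
           (\<Sum>b\<in>tup (\<lambda>i. lsums (A i)) n g. \<Prod>i<n. \<Sum>t\<in>lsol (A i) (b i). w i t * of_int (r i t (p i)))"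
        by simp
    qed
    also have "\<dots> = (if g = 0 then of_int (ldet n k) else 0)"
      by (rule comb_main[OF posA woA wm _ gG]) (simp_all add: w_def gw_def r_def)
    finally show ?thesis .
  qed
  have ldetk: "ldet n k = jdet G n eps F"
  proof -
    have "ldet n k = ldet n (\<lambda>i j. x_init_exp G n eps (F i) j)"
    proof (rule ldet_cong)
      fix i j assume "i < n" "j < n"
      then have "x_init_exp G n eps (F i) = xd (mn_ord (F i))" using Fok x_init_exp_eq by blast
      then show "k i j = x_init_exp G n eps (F i) j" by (simp add: k_def)
    qed
    then show ?thesis by (simp add: ldet_det jdet_def)
  qed
  have shift: "coef Y (x + hvec n eps (\<lambda>i. if i < n then -1 else 0)) = coef (Xm * Y) x" for Y :: "('a, 'k) mns" and x
    by (simp add: Xm_def prod_mon coef_mon_mult hvec_minus_one)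
  have R: "Res G n eps (coef (Invs * Jac)) = (\<lambda>\<gamma>. if \<gamma> = 0 then of_int (jdet G n eps F) else 0)"
  proof
    fix x show "Res G n eps (coef (Invs * Jac)) x = (if x = 0 then of_int (jdet G n eps F) else 0)"
      using coefkey[of x] G0 shift[of "Invs * Jac" x] by (auto simp: Res_def ldetk)
  qed
  have C: "CT G (coef (Xm * (Invs * Jac))) = (\<lambda>\<gamma>. if \<gamma> = 0 then of_int (jdet G n eps F) else 0)"
  proof
    fix x show "CT G (coef (Xm * (Invs * Jac))) x = (if x = 0 then of_int (jdet G n eps F) else 0)"
      using coefkey[of x] G0 by (auto simp: CT_def ldetk)
  qed
  have "mn_mult (mn_prod (map (\<lambda>i. mn_inv (F i)) [0..<n])) (jac G n eps F) = coef (Invs * Jac)"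
    by (simp add: invEq jacEq coef_mult)
  moreover have "LJ G n eps F = coef (Xm * (Invs * Jac))"
    unfolding LJ_def by (simp add: invEq jacEq xEq coef_mult)
  ultimately show ?thesis using R C by simp
qed

end

theorem mainTheorem10:
  fixes G :: "'a::linordered_ab_group_add set" and n :: nat and eps :: "nat \<Rightarrow> 'a"
    and F :: "nat \<Rightarrow> 'a \<Rightarrow> 'k::field"
  assumes "direct_sum_decomp G n eps"
    and "\<forall>i<n. is_MN (F i) \<and> F i \<noteq> (\<lambda>_. 0)"
  shows "Res G n eps (mn_mult (mn_prod (map (\<lambda>i. mn_inv (F i)) [0..<n])) (jac G n eps F))
           = (\<lambda>\<gamma>. if \<gamma> = 0 then of_int (jdet G n eps F) else 0)
         \<and> CT G (LJ G n eps F) = (\<lambda>\<gamma>. if \<gamma> = 0 then of_int (jdet G n eps F) else 0)"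
proof -
  interpret dsd G n eps by (rule dsd.intro) (rule assms(1))
  show ?thesis by (rule main_dsd[OF assms(2)])
qed

end
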